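(* Let $\Gamma$ be a finite undirected simple graph with vertex set $\{x_1,\dots,x_n\}$ whose maximal vertex degree equals $n-2$ and such that exactly one vertex has degree $n-2$. Then the associated group $G_\Gamma$ has the $R_\infty$-property.
   Context: For a finite undirected simple graph $\Gamma$ with vertex set $\{x_1,\dots,x_n\}$ and edge set $E$, the group $G_\Gamma$ is defined by the presentation with generators $x_1,\dots,x_n$ and $y_{i,j}$ for each pair $i<j$ with $x_ix_j\notin E$, and relations $[x_j,x_i]=1$ if $x_ix_j\in E$; $[x_j,x_i]=y_{i,j}$ if $x_ix_j\notin E$ and $i<j$; and $[x_l,y_{i,j}]=1$ for all $l$ and all such $y_{i,j}$. For a group $G$ and $\varphi\in\mathrm{Aut}(G)$, elements $a,b$ are $\varphi$-conjugate if $a=cb\varphi(c)^{-1}$ for some $c\in G$; the number $R(\varphi)\in\mathbb{N}_0\cup\{\infty\}$ of equivalence classes is the Reidemeister number. The Reidemeister spectrum is $\mathrm{Spec}_R(G)=\{R(\varphi):\varphi\in\mathrm{Aut}(G)\}$, and $G$ has the $R_\infty$-property if $\mathrm{Spec}_R(G)=\{\infty\}$. Here $\mathbb{N}_0$ denotes the positive integers. *)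

theory Defs
  imports "HOL-Algebra.Group"
begin

text \<open>A word over a generator type is a list of letters (g, b), where b = True
  marks the inverse letter g^-1.\<close>

type_synonym 'g word = "('g \<times> bool) list"

definition words_over :: "'g set \<Rightarrow> 'g word set" where
  "words_over S = {w. \<forall>l\<in>set w. fst l \<in> S}"

inductive pres_eq :: "'g set \<Rightarrow> ('g word \<times> 'g word) set \<Rightarrow> 'g word \<Rightarrow> 'g word \<Rightarrow> bool"
  for S R where
  pe_refl: "w \<in> words_over S \<Longrightarrow> pres_eq S R w w"
| pe_sym: "pres_eq S R u v \<Longrightarrow> pres_eq S R v u"
| pe_trans: "pres_eq S R u v \<Longrightarrow> pres_eq S R v w \<Longrightarrow> pres_eq S R u w"
| pe_app: "pres_eq S R a b \<Longrightarrow> pres_eq S R c d \<Longrightarrow> pres_eq S R (a @ c) (b @ d)"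
| pe_cancel: "g \<in> S \<Longrightarrow> pres_eq S R [(g, e), (g, \<not> e)] []"
| pe_rel: "(u, v) \<in> R \<Longrightarrow> u \<in> words_over S \<Longrightarrow> v \<in> words_over S \<Longrightarrow> pres_eq S R u v"

definition pres_rel :: "'g set \<Rightarrow> ('g word \<times> 'g word) set \<Rightarrow> ('g word \<times> 'g word) set" where
  "pres_rel S R = {(u, v). pres_eq S R u v}"

definition presented_group :: "'g set \<Rightarrow> ('g word \<times> 'g word) set \<Rightarrow> ('g word set) monoid" where
  "presented_group S R =
     \<lparr> carrier = words_over S // pres_rel S R,
       mult = (\<lambda>A B. \<Union>a\<in>A. \<Union>b\<in>B. pres_rel S R `` {a @ b}),
       one = pres_rel S R `` {[]} \<rparr>"

text \<open>Finite simple graph with vertex set {1..n} (vertex x_i is i); edges are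
  2-element subsets of {1..n}.\<close>

definition simple_graph :: "nat \<Rightarrow> nat set set \<Rightarrow> bool" where
  "simple_graph n E \<longleftrightarrow> (\<forall>e\<in>E. \<exists>i j. e = {i, j} \<and> i \<noteq> j \<and> i \<in> {1..n} \<and> j \<in> {1..n})"

definition degree :: "nat \<Rightarrow> nat set set \<Rightarrow> nat \<Rightarrow> nat" where
  "degree n E i = card {j \<in> {1..n}. {i, j} \<in> E}"

datatype gen = X nat | Y nat nat

definition nonedge :: "nat \<Rightarrow> nat set set \<Rightarrow> nat \<Rightarrow> nat \<Rightarrow> bool" where
  "nonedge n E i j \<longleftrightarrow> i \<in> {1..n} \<and> j \<in> {1..n} \<and> i < j \<and> {i, j} \<notin> E"

definition gamma_gens :: "nat \<Rightarrow> nat set set \<Rightarrow> gen set" where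
  "gamma_gens n E = {X l | l. l \<in> {1..n}} \<union> {Y i j | i j. nonedge n E i j}"

text \<open>Commutator convention [a,b] = a^-1 b^-1 a b.\<close>

definition comm_word :: "gen \<Rightarrow> gen \<Rightarrow> gen word" where
  "comm_word a b = [(a, True), (b, True), (a, False), (b, False)]"

definition gamma_rels :: "nat \<Rightarrow> nat set set \<Rightarrow> (gen word \<times> gen word) set" where
  "gamma_rels n E =
      {(comm_word (X j) (X i), []) | i j. i \<in> {1..n} \<and> j \<in> {1..n} \<and> i < j \<and> {i, j} \<in> E}
    \<union> {(comm_word (X j) (X i), [(Y i j, False)]) | i j. nonedge n E i j}
    \<union> {(comm_word (X l) (Y i j), []) | l i j. l \<in> {1..n} \<and> nonedge n E i j}"

definition G_Gamma :: "nat \<Rightarrow> nat set set \<Rightarrow> gen word set monoid" where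
  "G_Gamma n E = presented_group (gamma_gens n E) (gamma_rels n E)"

definition twisted_classes :: "('a, 'b) monoid_scheme \<Rightarrow> ('a \<Rightarrow> 'a) \<Rightarrow> 'a set set" where
  "twisted_classes G \<phi> =
     (\<lambda>b. {a. \<exists>c\<in>carrier G. a = c \<otimes>\<^bsub>G\<^esub> b \<otimes>\<^bsub>G\<^esub> inv\<^bsub>G\<^esub> (\<phi> c)}) ` carrier G"

definition R_infty :: "('a, 'b) monoid_scheme \<Rightarrow> bool" where
  "R_infty G \<longleftrightarrow> (\<forall>\<phi>\<in>iso G G. infinite (twisted_classes G \<phi>))"

end

theory Submission
  imports Defs "HOL-Library.Function_Algebras" "Jordan_Normal_Form.Determinant"
begin

lemma pres_eq_words: "pres_eq S R u v \<Longrightarrow> u \<in> words_over S \<and> v \<in> words_over S"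
  by (induction rule: pres_eq.induct) (auto simp: words_over_def)

lemma words_over_append[simp]: "a @ b \<in> words_over S \<longleftrightarrow> a \<in> words_over S \<and> b \<in> words_over S"
  by (auto simp: words_over_def)

lemma words_over_Cons[simp]: "l # b \<in> words_over S \<longleftrightarrow> fst l \<in> S \<and> b \<in> words_over S"
  by (auto simp: words_over_def)

lemma words_over_Nil[simp]: "[] \<in> words_over S"
  by (auto simp: words_over_def)

lemma equiv_pres: "equiv (words_over S) (pres_rel S R)"
  unfolding equiv_def refl_on_def sym_def trans_def pres_rel_def
  by (auto intro: pe_refl pe_sym pe_trans dest: pres_eq_words)

definition cls :: "'g set \<Rightarrow> ('g word \<times> 'g word) set \<Rightarrow> 'g word \<Rightarrow> 'g word set" where
  "cls S R w = pres_rel S R `` {w}"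

lemma cls_eq_iff: "a \<in> words_over S \<Longrightarrow> b \<in> words_over S \<Longrightarrow> cls S R a = cls S R b \<longleftrightarrow> pres_eq S R a b"
proof -
  assume "a \<in> words_over S" "b \<in> words_over S"
  then have "pres_rel S R `` {a} = pres_rel S R `` {b} \<longleftrightarrow> (a,b) \<in> pres_rel S R"
    by (rule eq_equiv_class_iff[OF equiv_pres])
  then show ?thesis unfolding cls_def pres_rel_def by simp
qed

lemma cls_eqI: "pres_eq S R a b \<Longrightarrow> cls S R a = cls S R b"
  using cls_eq_iff pres_eq_words by metis

lemma cls_in_carrier: "w \<in> words_over S \<Longrightarrow> cls S R w \<in> carrier (presented_group S R)"
  unfolding presented_group_def cls_def by (auto intro: quotientI)

lemma carrier_cls: "C \<in> carrier (presented_group S R) \<Longrightarrow> \<exists>w\<in>words_over S. C = cls S R w"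
  unfolding presented_group_def cls_def by (auto elim: quotientE)

lemma mem_cls: "w \<in> words_over S \<Longrightarrow> w \<in> cls S R w"
  unfolding cls_def pres_rel_def by (auto intro: pe_refl)

lemma mem_cls_iff: "u \<in> cls S R w \<longleftrightarrow> pres_eq S R w u"
  unfolding cls_def pres_rel_def by auto

lemma mult_cls: assumes "a \<in> words_over S" "b \<in> words_over S"
  shows "cls S R a \<otimes>\<^bsub>presented_group S R\<^esub> cls S R b = cls S R (a @ b)"
proof -
  have "(\<Union>a'\<in>cls S R a. \<Union>b'\<in>cls S R b. pres_rel S R `` {a' @ b'}) = cls S R (a @ b)"
  proof (intro equalityI subsetI)
    fix x assume "x \<in> (\<Union>a'\<in>cls S R a. \<Union>b'\<in>cls S R b. pres_rel S R `` {a' @ b'})"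
    then obtain a' b' where "a' \<in> cls S R a" "b' \<in> cls S R b" "x \<in> cls S R (a' @ b')"
      by (auto simp: cls_def)
    then have "pres_eq S R a a'" "pres_eq S R b b'" "x \<in> cls S R (a' @ b')" by (auto simp: mem_cls_iff)
    moreover have "cls S R (a' @ b') = cls S R (a @ b)"
      by (rule cls_eqI, rule pe_sym, rule pe_app) fact+
    ultimately show "x \<in> cls S R (a @ b)" by simp
  next
    fix x assume "x \<in> cls S R (a @ b)"
    then show "x \<in> (\<Union>a'\<in>cls S R a. \<Union>b'\<in>cls S R b. pres_rel S R `` {a' @ b'})"
      using mem_cls[OF assms(1)] mem_cls[OF assms(2)] unfolding cls_def by blast
  qed
  then show ?thesis unfolding presented_group_def by (simp add: cls_def)
qed

lemma one_cls: "\<one>\<^bsub>presented_group S R\<^esub> = cls S R []"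
  unfolding presented_group_def cls_def by simp

definition winv :: "'g word \<Rightarrow> 'g word" where
  "winv w = rev (map (\<lambda>(g, b). (g, \<not> b)) w)"

lemma winv_words: "w \<in> words_over S \<Longrightarrow> winv w \<in> words_over S"
  by (auto simp: winv_def words_over_def)

lemma winv_cancel: "w \<in> words_over S \<Longrightarrow> pres_eq S R (winv w @ w) []"
proof (induction w)
  case Nil then show ?case by (simp add: winv_def pe_refl)
next
  case (Cons l w)
  obtain g b where l: "l = (g, b)" by force
  have g: "g \<in> S" and w: "w \<in> words_over S" using Cons.prems l by auto
  have "winv (l # w) @ l # w = winv w @ ([(g, \<not> b), (g, \<not>\<not> b)] @ w)"
    by (simp add: winv_def l)
  moreover have "pres_eq S R (winv w @ ([(g, \<not> b), (g, \<not>\<not> b)] @ w)) (winv w @ ([] @ w))"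
    by (intro pe_app pe_refl pe_cancel winv_words w g)
  ultimately show ?case using Cons.IH[OF w] by (metis append_Nil pe_trans)
qed

lemma presented_group_group: "group (presented_group S R)"
proof (rule groupI)
  let ?G = "presented_group S R"
  show "\<one>\<^bsub>?G\<^esub> \<in> carrier ?G" by (simp add: one_cls cls_in_carrier)
  fix x y z assume x: "x \<in> carrier ?G" and y: "y \<in> carrier ?G" and z: "z \<in> carrier ?G"
  obtain a where a: "a \<in> words_over S" "x = cls S R a" using carrier_cls[OF x] by blast
  obtain b where b: "b \<in> words_over S" "y = cls S R b" using carrier_cls[OF y] by blast
  obtain c where c: "c \<in> words_over S" "z = cls S R c" using carrier_cls[OF z] by blast
  show "x \<otimes>\<^bsub>?G\<^esub> y \<in> carrier ?G" using a b by (simp add: mult_cls cls_in_carrier)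
  show "x \<otimes>\<^bsub>?G\<^esub> y \<otimes>\<^bsub>?G\<^esub> z = x \<otimes>\<^bsub>?G\<^esub> (y \<otimes>\<^bsub>?G\<^esub> z)" using a b c by (simp add: mult_cls)
  show "\<one>\<^bsub>?G\<^esub> \<otimes>\<^bsub>?G\<^esub> x = x" using a by (simp add: mult_cls one_cls)
  show "\<exists>y\<in>carrier ?G. y \<otimes>\<^bsub>?G\<^esub> x = \<one>\<^bsub>?G\<^esub>"
  proof
    show "cls S R (winv a) \<in> carrier ?G" using winv_words[OF a(1)] by (rule cls_in_carrier)
    show "cls S R (winv a) \<otimes>\<^bsub>?G\<^esub> x = \<one>\<^bsub>?G\<^esub>"
      using a winv_words[OF a(1)] winv_cancel[OF a(1)] by (simp add: mult_cls one_cls cls_eqI)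
  qed
qed


definition wval :: "('b, 'c) monoid_scheme \<Rightarrow> ('g \<Rightarrow> 'b) \<Rightarrow> 'g word \<Rightarrow> 'b" where
  "wval H f w = foldr (\<lambda>(g, b) acc. (if b then inv\<^bsub>H\<^esub> f g else f g) \<otimes>\<^bsub>H\<^esub> acc) w \<one>\<^bsub>H\<^esub>"

lemma wval_Nil[simp]: "wval H f [] = \<one>\<^bsub>H\<^esub>" by (simp add: wval_def)
lemma wval_Cons[simp]: "wval H f ((g,b) # w) = (if b then inv\<^bsub>H\<^esub> f g else f g) \<otimes>\<^bsub>H\<^esub> wval H f w"
  by (simp add: wval_def)

lemma wval_closed: "group H \<Longrightarrow> f ` S \<subseteq> carrier H \<Longrightarrow> w \<in> words_over S \<Longrightarrow> wval H f w \<in> carrier H"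
  by (induction w) (auto simp: group.inv_closed group.is_monoid monoid.m_closed)

lemma wval_append: assumes "group H" "f ` S \<subseteq> carrier H" "a \<in> words_over S" "b \<in> words_over S"
  shows "wval H f (a @ b) = wval H f a \<otimes>\<^bsub>H\<^esub> wval H f b"
  using assms(3)
proof (induction a)
  case Nil
  have "wval H f b \<in> carrier H" using wval_closed assms by metis
  then show ?case using assms by (simp add: group.is_monoid monoid.l_one)
next
  case (Cons l a)
  obtain g c where l: "l = (g,c)" by force
  have g: "f g \<in> carrier H" using Cons.prems l assms(2) by auto
  show ?case using Cons l assms g wval_closed[OF assms(1,2)]
    by (auto simp: monoid.m_assoc group.is_monoid group.inv_closed)
qed

lemma wval_pres: assumes H: "group H" and f: "f ` S \<subseteq> carrier H"
  and rel: "\<And>u v. (u, v) \<in> R \<Longrightarrow> u \<in> words_over S \<Longrightarrow> v \<in> words_over S \<Longrightarrow> wval H f u = wval H f v"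
  shows "pres_eq S R u v \<Longrightarrow> wval H f u = wval H f v"
proof (induction rule: pres_eq.induct)
  case (pe_app a b c d)
  then show ?case using wval_append[OF H f] pres_eq_words by metis
next
  case (pe_cancel g e)
  then have "f g \<in> carrier H" using f by auto
  then show ?case using H by (auto simp: group.r_inv group.l_inv group.inv_closed group.is_monoid monoid.r_one)
qed (auto simp: rel)

definition pext :: "'g set \<Rightarrow> ('g word \<times> 'g word) set \<Rightarrow> ('b, 'c) monoid_scheme \<Rightarrow> ('g \<Rightarrow> 'b) \<Rightarrow> 'g word set \<Rightarrow> 'b" where
  "pext S R H f C = wval H f (SOME w. w \<in> C)"

lemma pext_cls: assumes H: "group H" and f: "f ` S \<subseteq> carrier H"
  and rel: "\<And>u v. (u, v) \<in> R \<Longrightarrow> u \<in> words_over S \<Longrightarrow> v \<in> words_over S \<Longrightarrow> wval H f u = wval H f v"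
  and w: "w \<in> words_over S"
  shows "pext S R H f (cls S R w) = wval H f w"
proof -
  have "(SOME u. u \<in> cls S R w) \<in> cls S R w" using mem_cls[OF w] by (rule someI)
  then have "pres_eq S R w (SOME u. u \<in> cls S R w)" by (simp add: mem_cls_iff)
  then show ?thesis unfolding pext_def using wval_pres[OF H f rel] by metis
qed

lemma pext_hom: assumes H: "group H" and f: "f ` S \<subseteq> carrier H"
  and rel: "\<And>u v. (u, v) \<in> R \<Longrightarrow> u \<in> words_over S \<Longrightarrow> v \<in> words_over S \<Longrightarrow> wval H f u = wval H f v"
  shows "pext S R H f \<in> hom (presented_group S R) H"
proof (rule homI)
  fix x assume "x \<in> carrier (presented_group S R)"
  then obtain a where a: "a \<in> words_over S" "x = cls S R a" using carrier_cls by blast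
  then show "pext S R H f x \<in> carrier H" using pext_cls[OF H f rel] wval_closed[OF H f] by simp
next
  fix x y assume "x \<in> carrier (presented_group S R)" "y \<in> carrier (presented_group S R)"
  then obtain a b where a: "a \<in> words_over S" "x = cls S R a" and b: "b \<in> words_over S" "y = cls S R b"
    using carrier_cls by metis
  then show "pext S R H f (x \<otimes>\<^bsub>presented_group S R\<^esub> y) = pext S R H f x \<otimes>\<^bsub>H\<^esub> pext S R H f y"
    using pext_cls[OF H f rel] wval_append[OF H f] by (simp add: mult_cls)
qed

lemma cls_Cons: "l # w \<in> words_over S \<Longrightarrow> cls S R (l # w) = cls S R [l] \<otimes>\<^bsub>presented_group S R\<^esub> cls S R w"
  by (simp add: mult_cls)

lemma cls_inv: assumes "g \<in> S"
  shows "cls S R [(g, True)] = inv\<^bsub>presented_group S R\<^esub> cls S R [(g, False)]"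
proof -
  interpret group "presented_group S R" by (rule presented_group_group)
  have w: "[(g, True)] \<in> words_over S" "[(g, False)] \<in> words_over S" using assms by auto
  have "cls S R [(g, True)] \<otimes>\<^bsub>presented_group S R\<^esub> cls S R [(g, False)] = \<one>\<^bsub>presented_group S R\<^esub>"
    using w pe_cancel[OF assms, of R True] by (simp add: mult_cls one_cls cls_eqI)
  then show ?thesis using w cls_in_carrier by (metis inv_equality)
qed


definition evec :: "nat \<Rightarrow> nat \<Rightarrow> int" where "evec l = (\<lambda>i. if i = l then 1 else 0)"
definition pvec :: "nat \<times> nat \<Rightarrow> nat \<times> nat \<Rightarrow> int" where "pvec p = (\<lambda>q. if q = p then 1 else 0)"

definition beta :: "nat \<Rightarrow> nat set set \<Rightarrow> (nat \<Rightarrow> int) \<Rightarrow> (nat \<Rightarrow> int) \<Rightarrow> nat \<times> nat \<Rightarrow> int" where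
  "beta n E a b = (\<lambda>(p,q). if nonedge n E p q then a q * b p else 0)"

type_synonym mel = "(nat \<Rightarrow> int) \<times> (nat \<times> nat \<Rightarrow> int)"

definition Model :: "nat \<Rightarrow> nat set set \<Rightarrow> mel monoid" where
  "Model n E = \<lparr>carrier = UNIV, Group.monoid.mult = (\<lambda>x y. (fst x + fst y, snd x + snd y + beta n E (fst x) (fst y))),
     Group.monoid.one = (0, 0)\<rparr>"

lemma beta_add1: "beta n E (a + b) c = beta n E a c + beta n E b c"
  by (auto simp: beta_def fun_eq_iff algebra_simps)
lemma beta_add2: "beta n E c (a + b) = beta n E c a + beta n E c b"
  by (auto simp: beta_def fun_eq_iff algebra_simps)
lemma beta_minus1: "beta n E (- a) c = - beta n E a c"
  by (auto simp: beta_def fun_eq_iff algebra_simps)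
lemma beta_minus2: "beta n E c (- a) = - beta n E c a"
  by (auto simp: beta_def fun_eq_iff algebra_simps)
lemma beta_diff1: "beta n E (a - b) c = beta n E a c - beta n E b c"
  by (auto simp: beta_def fun_eq_iff algebra_simps)
lemma beta_diff2: "beta n E c (a - b) = beta n E c a - beta n E c b"
  by (auto simp: beta_def fun_eq_iff algebra_simps)
lemma beta_zero1[simp]: "beta n E 0 c = 0"
  by (auto simp: beta_def fun_eq_iff)
lemma beta_zero2[simp]: "beta n E c 0 = 0"
  by (auto simp: beta_def fun_eq_iff)

lemmas beta_lin = beta_add1 beta_add2 beta_minus1 beta_minus2 beta_diff1 beta_diff2

lemma Model_mult[simp]: "x \<otimes>\<^bsub>Model n E\<^esub> y = (fst x + fst y, snd x + snd y + beta n E (fst x) (fst y))"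
  by (simp add: Model_def)
lemma Model_one[simp]: "\<one>\<^bsub>Model n E\<^esub> = (0, 0)"
  by (simp add: Model_def)
lemma Model_carrier[simp]: "carrier (Model n E) = UNIV"
  by (simp add: Model_def)

lemma Model_group: "group (Model n E)"
proof (rule groupI)
  fix x y z :: mel
  show "x \<otimes>\<^bsub>Model n E\<^esub> y \<otimes>\<^bsub>Model n E\<^esub> z = x \<otimes>\<^bsub>Model n E\<^esub> (y \<otimes>\<^bsub>Model n E\<^esub> z)"
    by (simp add: beta_lin algebra_simps)
  show "\<exists>y\<in>carrier (Model n E). y \<otimes>\<^bsub>Model n E\<^esub> x = \<one>\<^bsub>Model n E\<^esub>"
    by (rule bexI[of _ "(- fst x, - snd x + beta n E (fst x) (fst x))"]) (auto simp: beta_lin)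
qed auto

lemma Model_inv[simp]: "inv\<^bsub>Model n E\<^esub> x = (- fst x, - snd x + beta n E (fst x) (fst x))"
proof -
  interpret group "Model n E" by (rule Model_group)
  show ?thesis by (rule inv_equality) (auto simp: beta_lin)
qed

definition omega :: "nat \<Rightarrow> nat set set \<Rightarrow> (nat \<Rightarrow> int) \<Rightarrow> (nat \<Rightarrow> int) \<Rightarrow> nat \<times> nat \<Rightarrow> int" where
  "omega n E a b = beta n E a b - beta n E b a"

lemma Model_comm: "inv\<^bsub>Model n E\<^esub> x \<otimes>\<^bsub>Model n E\<^esub> (inv\<^bsub>Model n E\<^esub> y \<otimes>\<^bsub>Model n E\<^esub> (x \<otimes>\<^bsub>Model n E\<^esub> (y \<otimes>\<^bsub>Model n E\<^esub> \<one>\<^bsub>Model n E\<^esub>)))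
  = (0, omega n E (fst x) (fst y))"
  by (simp add: beta_lin omega_def algebra_simps)

fun gv :: "gen \<Rightarrow> mel" where
  "gv (X l) = (evec l, 0)"
| "gv (Y i j) = (0, pvec (i, j))"

abbreviation "GG n E \<equiv> G_Gamma n E"
abbreviation "SS n E \<equiv> gamma_gens n E"
abbreviation "RR n E \<equiv> gamma_rels n E"

lemma X_in_gens[simp]: "X l \<in> gamma_gens n E \<longleftrightarrow> l \<in> {1..n}"
  by (auto simp: gamma_gens_def)
lemma Y_in_gens[simp]: "Y i j \<in> gamma_gens n E \<longleftrightarrow> nonedge n E i j"
  by (auto simp: gamma_gens_def)

lemma wval_comm: "wval H f (comm_word a b) = inv\<^bsub>H\<^esub> f a \<otimes>\<^bsub>H\<^esub> (inv\<^bsub>H\<^esub> f b \<otimes>\<^bsub>H\<^esub> (f a \<otimes>\<^bsub>H\<^esub> (f b \<otimes>\<^bsub>H\<^esub> \<one>\<^bsub>H\<^esub>)))"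
  by (simp add: comm_word_def)

lemma omega_evec_edge: assumes "{i, j} \<in> E"
  shows "omega n E (evec j) (evec i) = 0"
  using assms by (auto simp: omega_def beta_def evec_def fun_eq_iff nonedge_def insert_commute)

lemma omega_evec_nonedge: assumes "nonedge n E i j"
  shows "omega n E (evec j) (evec i) = pvec (i, j)"
  using assms by (auto simp: omega_def beta_def evec_def pvec_def fun_eq_iff nonedge_def)

lemma rels_ok: assumes "(u, v) \<in> gamma_rels n E"
  shows "wval (Model n E) gv u = wval (Model n E) gv v"
  using assms unfolding gamma_rels_def
  apply (elim UnE CollectE exE conjE)
  subgoal for i j
    apply (simp only: prod.inject)
    apply (simp only: wval_comm Model_comm) by (simp add: omega_evec_edge)
  subgoal for i j
    apply (simp only: prod.inject)
    apply (simp only: wval_comm Model_comm) by (simp add: omega_evec_nonedge)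
  subgoal for l i j
    apply (simp only: prod.inject)
    apply (simp only: wval_comm Model_comm) by (simp add: omega_def)
  done

definition eval :: "nat \<Rightarrow> nat set set \<Rightarrow> gen word set \<Rightarrow> mel" where
  "eval n E = pext (gamma_gens n E) (gamma_rels n E) (Model n E) gv"

lemma G_group: "group (G_Gamma n E)"
  unfolding G_Gamma_def by (rule presented_group_group)

lemma eval_hom: "eval n E \<in> hom (G_Gamma n E) (Model n E)"
  unfolding eval_def G_Gamma_def by (rule pext_hom[OF Model_group]) (auto simp: rels_ok)

lemma eval_cls: "w \<in> words_over (gamma_gens n E) \<Longrightarrow> eval n E (cls (gamma_gens n E) (gamma_rels n E) w) = wval (Model n E) gv w"
  unfolding eval_def by (rule pext_cls[OF Model_group]) (auto simp: rels_ok)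

definition xg :: "nat \<Rightarrow> nat set set \<Rightarrow> nat \<Rightarrow> gen word set" where
  "xg n E l = cls (gamma_gens n E) (gamma_rels n E) [(X l, False)]"
definition yg :: "nat \<Rightarrow> nat set set \<Rightarrow> nat \<Rightarrow> nat \<Rightarrow> gen word set" where
  "yg n E i j = cls (gamma_gens n E) (gamma_rels n E) [(Y i j, False)]"

lemma xg_carrier: "l \<in> {1..n} \<Longrightarrow> xg n E l \<in> carrier (G_Gamma n E)"
  unfolding xg_def G_Gamma_def by (rule cls_in_carrier) simp
lemma yg_carrier: "nonedge n E i j \<Longrightarrow> yg n E i j \<in> carrier (G_Gamma n E)"
  unfolding yg_def G_Gamma_def by (rule cls_in_carrier) simp

lemma eval_xg: "l \<in> {1..n} \<Longrightarrow> eval n E (xg n E l) = (evec l, 0)"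
  unfolding xg_def by (subst eval_cls) auto
lemma eval_yg: "nonedge n E i j \<Longrightarrow> eval n E (yg n E i j) = (0, pvec (i,j))"
  unfolding yg_def by (subst eval_cls) auto

lemma cls_comm: assumes "a \<in> gamma_gens n E" "b \<in> gamma_gens n E"
  shows "cls (gamma_gens n E) (gamma_rels n E) (comm_word a b) =
    inv\<^bsub>G_Gamma n E\<^esub> cls (gamma_gens n E) (gamma_rels n E) [(a,False)] \<otimes>\<^bsub>G_Gamma n E\<^esub>
    (inv\<^bsub>G_Gamma n E\<^esub> cls (gamma_gens n E) (gamma_rels n E) [(b,False)] \<otimes>\<^bsub>G_Gamma n E\<^esub>
    (cls (gamma_gens n E) (gamma_rels n E) [(a,False)] \<otimes>\<^bsub>G_Gamma n E\<^esub> cls (gamma_gens n E) (gamma_rels n E) [(b,False)]))"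
  using assms unfolding G_Gamma_def comm_word_def
  by (simp add: mult_cls cls_inv[symmetric])

lemma G_rel_edge: assumes "i \<in> {1..n}" "j \<in> {1..n}" "i < j" "{i,j} \<in> E"
  shows "inv\<^bsub>G_Gamma n E\<^esub> xg n E j \<otimes>\<^bsub>G_Gamma n E\<^esub> (inv\<^bsub>G_Gamma n E\<^esub> xg n E i \<otimes>\<^bsub>G_Gamma n E\<^esub> (xg n E j \<otimes>\<^bsub>G_Gamma n E\<^esub> xg n E i))
    = \<one>\<^bsub>G_Gamma n E\<^esub>"
proof -
  have "(comm_word (X j) (X i), []) \<in> gamma_rels n E" using assms unfolding gamma_rels_def by blast
  then have "pres_eq (gamma_gens n E) (gamma_rels n E) (comm_word (X j) (X i)) []"
    using assms by (intro pe_rel) (auto simp: comm_word_def)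
  then show ?thesis using cls_comm[of "X j" n E "X i"] assms
    by (simp add: xg_def cls_eqI G_Gamma_def one_cls)
qed

lemma G_rel_nonedge: assumes "nonedge n E i j"
  shows "inv\<^bsub>G_Gamma n E\<^esub> xg n E j \<otimes>\<^bsub>G_Gamma n E\<^esub> (inv\<^bsub>G_Gamma n E\<^esub> xg n E i \<otimes>\<^bsub>G_Gamma n E\<^esub> (xg n E j \<otimes>\<^bsub>G_Gamma n E\<^esub> xg n E i))
    = yg n E i j"
proof -
  have "(comm_word (X j) (X i), [(Y i j, False)]) \<in> gamma_rels n E" using assms unfolding gamma_rels_def by blast
  then have "pres_eq (gamma_gens n E) (gamma_rels n E) (comm_word (X j) (X i)) [(Y i j, False)]"
    using assms by (intro pe_rel) (auto simp: comm_word_def nonedge_def)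
  then show ?thesis using cls_comm[of "X j" n E "X i"] assms
    by (simp add: xg_def yg_def cls_eqI G_Gamma_def nonedge_def)
qed


lemma add_zero:
  fixes h :: "gen word set \<Rightarrow> 'b::ab_group_add"
  assumes hadd: "\<And>x y. x \<in> carrier (G_Gamma n E) \<Longrightarrow> y \<in> carrier (G_Gamma n E) \<Longrightarrow>
      h (x \<otimes>\<^bsub>G_Gamma n E\<^esub> y) = h x + h y"
    and hx: "\<And>l. l \<in> {1..n} \<Longrightarrow> h (xg n E l) = 0"
    and x: "x \<in> carrier (G_Gamma n E)"
  shows "h x = 0"
proof -
  interpret G: group "G_Gamma n E" by (rule G_group)
  have h1: "h \<one>\<^bsub>G_Gamma n E\<^esub> = 0"
    using hadd[of "\<one>\<^bsub>G_Gamma n E\<^esub>" "\<one>\<^bsub>G_Gamma n E\<^esub>"] by simp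
  have hinv: "h (inv\<^bsub>G_Gamma n E\<^esub> z) = - h z" if "z \<in> carrier (G_Gamma n E)" for z
    using hadd[of "inv\<^bsub>G_Gamma n E\<^esub> z" z] that h1 by (simp add: eq_neg_iff_add_eq_0)
  have hy: "h (yg n E i j) = 0" if "nonedge n E i j" for i j
  proof -
    have ij: "i \<in> {1..n}" "j \<in> {1..n}" using that by (auto simp: nonedge_def)
    have "h (yg n E i j) = h (inv\<^bsub>G_Gamma n E\<^esub> xg n E j \<otimes>\<^bsub>G_Gamma n E\<^esub> (inv\<^bsub>G_Gamma n E\<^esub> xg n E i \<otimes>\<^bsub>G_Gamma n E\<^esub> (xg n E j \<otimes>\<^bsub>G_Gamma n E\<^esub> xg n E i)))"
      using G_rel_nonedge[OF that] by simp
    also have "\<dots> = - h (xg n E j) + (- h (xg n E i) + (h (xg n E j) + h (xg n E i)))"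
      using ij xg_carrier by (simp only: hadd hinv G.inv_closed G.m_closed)
    finally show ?thesis using ij hx by simp
  qed
  have hletter: "h (cls (gamma_gens n E) (gamma_rels n E) [l]) = 0" if "fst l \<in> gamma_gens n E" for l
  proof -
    obtain g b where l: "l = (g, b)" by force
    have g: "g \<in> gamma_gens n E" using that l by simp
    have hF: "h (cls (gamma_gens n E) (gamma_rels n E) [(g, False)]) = 0"
    proof (cases g)
      case (X k) then show ?thesis using g hx[of k] by (simp add: xg_def)
    next
      case (Y i j) then show ?thesis using g hy[of i j] by (simp add: yg_def)
    qed
    have cF: "cls (gamma_gens n E) (gamma_rels n E) [(g, False)] \<in> carrier (G_Gamma n E)"
      using g unfolding G_Gamma_def by (intro cls_in_carrier) auto
    show ?thesis
    proof (cases b)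
      case True
      have "cls (gamma_gens n E) (gamma_rels n E) [(g, True)] = inv\<^bsub>G_Gamma n E\<^esub> cls (gamma_gens n E) (gamma_rels n E) [(g, False)]"
        using cls_inv[OF g] by (simp add: G_Gamma_def)
      then show ?thesis using l True hinv[OF cF] hF by simp
    next
      case False
      then show ?thesis using l hF by simp
    qed
  qed
  have "\<forall>w\<in>words_over (gamma_gens n E). h (cls (gamma_gens n E) (gamma_rels n E) w) = 0"
  proof
    fix w assume "w \<in> words_over (gamma_gens n E)"
    then show "h (cls (gamma_gens n E) (gamma_rels n E) w) = 0"
    proof (induction w)
      case Nil then show ?case using h1 by (simp add: G_Gamma_def one_cls)
    next
      case (Cons l w)
      have l: "fst l \<in> gamma_gens n E" and w: "w \<in> words_over (gamma_gens n E)" using Cons.prems by auto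
      have e: "cls (gamma_gens n E) (gamma_rels n E) (l # w) =
        cls (gamma_gens n E) (gamma_rels n E) [l] \<otimes>\<^bsub>G_Gamma n E\<^esub> cls (gamma_gens n E) (gamma_rels n E) w"
        using Cons.prems unfolding G_Gamma_def by (rule cls_Cons)
      have c: "cls (gamma_gens n E) (gamma_rels n E) [l] \<in> carrier (G_Gamma n E)"
        "cls (gamma_gens n E) (gamma_rels n E) w \<in> carrier (G_Gamma n E)"
        using l w unfolding G_Gamma_def by (auto intro: cls_in_carrier)
      show ?case unfolding e hadd[OF c] using Cons.IH[OF w] hletter[OF l] by simp
    qed
  qed
  then show ?thesis using x carrier_cls unfolding G_Gamma_def by metis
qed
definition al :: "nat \<Rightarrow> nat set set \<Rightarrow> gen word set \<Rightarrow> nat \<Rightarrow> int" where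
  "al n E g = fst (eval n E g)"
definition ta :: "nat \<Rightarrow> nat set set \<Rightarrow> gen word set \<Rightarrow> nat \<times> nat \<Rightarrow> int" where
  "ta n E g = snd (eval n E g)"

lemma eval_mult: "x \<in> carrier (G_Gamma n E) \<Longrightarrow> y \<in> carrier (G_Gamma n E) \<Longrightarrow>
  eval n E (x \<otimes>\<^bsub>G_Gamma n E\<^esub> y) = eval n E x \<otimes>\<^bsub>Model n E\<^esub> eval n E y"
  using eval_hom by (rule hom_mult)

lemma eval_one: "eval n E \<one>\<^bsub>G_Gamma n E\<^esub> = (0, 0)"
  using group_hom.hom_one[of "G_Gamma n E" "Model n E" "eval n E"] G_group Model_group eval_hom
  by (simp add: group_hom_def group_hom_axioms_def)

lemma eval_inv: "x \<in> carrier (G_Gamma n E) \<Longrightarrow> eval n E (inv\<^bsub>G_Gamma n E\<^esub> x) = inv\<^bsub>Model n E\<^esub> eval n E x"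
  using group_hom.hom_inv[of "G_Gamma n E" "Model n E" "eval n E"] G_group Model_group eval_hom
  by (simp add: group_hom_def group_hom_axioms_def)

lemma al_mult: "x \<in> carrier (G_Gamma n E) \<Longrightarrow> y \<in> carrier (G_Gamma n E) \<Longrightarrow>
  al n E (x \<otimes>\<^bsub>G_Gamma n E\<^esub> y) = al n E x + al n E y"
  by (simp add: al_def eval_mult)

lemma al_inv: "x \<in> carrier (G_Gamma n E) \<Longrightarrow> al n E (inv\<^bsub>G_Gamma n E\<^esub> x) = - al n E x"
  by (simp add: al_def eval_inv)

lemma al_one: "al n E \<one>\<^bsub>G_Gamma n E\<^esub> = 0"
  by (simp add: al_def eval_one)

lemma al_xg: "l \<in> {1..n} \<Longrightarrow> al n E (xg n E l) = evec l"
  by (simp add: al_def eval_xg)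

lemma al_supp: assumes "x \<in> carrier (G_Gamma n E)" "i \<notin> {1..n}" shows "al n E x i = 0"
proof -
  have "(\<lambda>g. (\<lambda>i. if i \<in> {1..n} then 0 else al n E g i)) x = 0"
    by (rule add_zero[OF _ _ assms(1)]) (auto simp: al_mult al_xg evec_def fun_eq_iff)
  from fun_cong[OF this, of i] show ?thesis using assms(2) by (auto split: if_splits)
qed

definition Mt :: "nat \<Rightarrow> nat set set \<Rightarrow> (gen word set \<Rightarrow> gen word set) \<Rightarrow> nat \<Rightarrow> nat \<Rightarrow> int" where
  "Mt n E \<phi> k = al n E (\<phi> (xg n E k))"
definition Mv :: "nat \<Rightarrow> nat set set \<Rightarrow> (gen word set \<Rightarrow> gen word set) \<Rightarrow> (nat \<Rightarrow> int) \<Rightarrow> nat \<Rightarrow> int" where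
  "Mv n E \<phi> a = (\<lambda>i. \<Sum>k\<in>{1..n}. a k * Mt n E \<phi> k i)"

lemma sum_evec: "finite A \<Longrightarrow> (\<Sum>k\<in>A. evec l k * f k) = (if l \<in> A then f l else 0)"
proof -
  assume A: "finite A"
  have "(\<Sum>k\<in>A. evec l k * f k) = (\<Sum>k\<in>A. if k = l then f k else 0)"
    by (rule sum.cong) (auto simp: evec_def)
  then show ?thesis using A by (simp add: sum.delta')
qed

lemma sum_evec2: "finite A \<Longrightarrow> (\<Sum>k\<in>A. f k * evec l k) = (if l \<in> A then f l else 0)"
  using sum_evec[of A l f] by (simp add: mult.commute)

lemma evec_sym: "evec l i = evec i l" by (simp add: evec_def)

lemma Mv_add: "Mv n E \<phi> (a + b) = Mv n E \<phi> a + Mv n E \<phi> b"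
  by (simp add: Mv_def fun_eq_iff algebra_simps sum.distrib)
lemma Mv_evec: "l \<in> {1..n} \<Longrightarrow> Mv n E \<phi> (evec l) = Mt n E \<phi> l"
  by (simp add: Mv_def fun_eq_iff sum_evec del: atLeastAtMost_iff)

lemma al_phi: assumes "\<phi> \<in> hom (G_Gamma n E) (G_Gamma n E)" "x \<in> carrier (G_Gamma n E)"
  shows "al n E (\<phi> x) = Mv n E \<phi> (al n E x)"
proof -
  have "(\<lambda>g. al n E (\<phi> g) - Mv n E \<phi> (al n E g)) x = 0"
  proof (rule add_zero[OF _ _ assms(2)])
    fix x y assume "x \<in> carrier (G_Gamma n E)" "y \<in> carrier (G_Gamma n E)"
    then show "al n E (\<phi> (x \<otimes>\<^bsub>G_Gamma n E\<^esub> y)) - Mv n E \<phi> (al n E (x \<otimes>\<^bsub>G_Gamma n E\<^esub> y)) =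
      (al n E (\<phi> x) - Mv n E \<phi> (al n E x)) + (al n E (\<phi> y) - Mv n E \<phi> (al n E y))"
      using assms(1) by (simp add: hom_mult hom_in_carrier al_mult Mv_add)
  next
    fix l :: nat assume "l \<in> {1..n}"
    then show "al n E (\<phi> (xg n E l)) - Mv n E \<phi> (al n E (xg n E l)) = 0"
      by (simp add: al_xg Mv_evec Mt_def)
  qed
  then show ?thesis by simp
qed

lemma Mv_comp: assumes "\<phi> \<in> hom (G_Gamma n E) (G_Gamma n E)" "\<psi> \<in> hom (G_Gamma n E) (G_Gamma n E)"
  and inv: "\<And>g. g \<in> carrier (G_Gamma n E) \<Longrightarrow> \<phi> (\<psi> g) = g"
  and supp: "\<And>i. i \<notin> {1..n} \<Longrightarrow> a i = 0"
  shows "Mv n E \<phi> (Mv n E \<psi> a) = a"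
proof -
  have col: "Mv n E \<phi> (Mt n E \<psi> l) = evec l" if "l \<in> {1..n}" for l
  proof -
    have "Mv n E \<phi> (Mt n E \<psi> l) = al n E (\<phi> (\<psi> (xg n E l)))"
      unfolding Mt_def using al_phi[OF assms(1)] hom_in_carrier[OF assms(2)] xg_carrier[OF that] by simp
    also have "\<dots> = evec l" using inv xg_carrier[OF that] al_xg[OF that] by simp
    finally show ?thesis .
  qed
  have "Mv n E \<phi> (Mv n E \<psi> a) i = a i" for i
  proof -
    have "Mv n E \<phi> (Mv n E \<psi> a) i = (\<Sum>k\<in>{1..n}. (\<Sum>l\<in>{1..n}. a l * Mt n E \<psi> l k) * Mt n E \<phi> k i)"
      by (simp add: Mv_def)
    also have "\<dots> = (\<Sum>k\<in>{1..n}. \<Sum>l\<in>{1..n}. a l * (Mt n E \<psi> l k * Mt n E \<phi> k i))"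
      by (simp add: sum_distrib_right mult.assoc)
    also have "\<dots> = (\<Sum>l\<in>{1..n}. \<Sum>k\<in>{1..n}. a l * (Mt n E \<psi> l k * Mt n E \<phi> k i))"
      by (rule sum.swap)
    also have "\<dots> = (\<Sum>l\<in>{1..n}. a l * (\<Sum>k\<in>{1..n}. Mt n E \<psi> l k * Mt n E \<phi> k i))"
      by (simp add: sum_distrib_left)
    also have "\<dots> = (\<Sum>l\<in>{1..n}. a l * evec i l)"
    proof (intro sum.cong refl)
      fix l assume l: "l \<in> {1..n}"
      have "Mv n E \<phi> (Mt n E \<psi> l) i = evec l i" using col[OF l] by simp
      then show "a l * (\<Sum>k\<in>{1..n}. Mt n E \<psi> l k * Mt n E \<phi> k i) = a l * evec i l"
        unfolding Mv_def by (simp add: evec_sym)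
    qed
    also have "\<dots> = (if i \<in> {1..n} then a i else 0)"
      by (rule sum_evec2) simp
    also have "\<dots> = a i" using supp by auto
    finally show ?thesis .
  qed
  then show ?thesis by (simp add: fun_eq_iff)
qed


lemma LA_transpose:
  fixes A :: "'i \<Rightarrow> 'i \<Rightarrow> int"
  assumes I: "finite I" and x: "i0 \<in> I" "x i0 \<noteq> 0"
    and hfix: "\<And>i. i \<in> I \<Longrightarrow> (\<Sum>j\<in>I. A i j * x j) = x i"
  shows "\<exists>u. (\<exists>j\<in>I. u j \<noteq> 0) \<and> (\<forall>j\<in>I. (\<Sum>i\<in>I. u i * A i j) = u j)"
proof -
  define N where "N = card I"
  obtain b where b: "bij_betw b {0..<N} I" using ex_bij_betw_nat_finite[OF I] unfolding N_def by blast
  define B :: "int mat" where "B = mat N N (\<lambda>(r, c). A (b r) (b c) - (if r = c then 1 else 0))"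
  have Bc: "B \<in> carrier_mat N N" by (simp add: B_def)
  define xv where "xv = vec N (\<lambda>c. x (b c))"
  have xvc: "xv \<in> carrier_vec N" by (simp add: xv_def)
  have sumI: "(\<Sum>j\<in>I. h j) = (\<Sum>c\<in>{0..<N}. h (b c))" for h :: "'i \<Rightarrow> int"
    using sum.reindex_bij_betw[OF b, of h] by simp
  have "B *\<^sub>v xv = 0\<^sub>v N"
  proof (rule eq_vecI)
    fix r assume r: "r < dim_vec (0\<^sub>v N :: int vec)"
    then have r': "r < N" by simp
    have br: "b r \<in> I" using b r' by (auto simp: bij_betw_def)
    have "(B *\<^sub>v xv) $ r = (\<Sum>c\<in>{0..<N}. (A (b r) (b c) - (if r = c then 1 else 0)) * x (b c))"
      using r' by (simp add: B_def xv_def scalar_prod_def)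
    also have "\<dots> = (\<Sum>c\<in>{0..<N}. A (b r) (b c) * x (b c)) - x (b r)"
      using r' by (simp add: left_diff_distrib sum_subtractf if_distrib[of "\<lambda>z. z * _"] sum.delta)
    also have "\<dots> = 0" using hfix[OF br] sumI[of "\<lambda>j. A (b r) j * x j"] by simp
    finally show "(B *\<^sub>v xv) $ r = (0\<^sub>v N) $ r" using r' by simp
  qed (simp add: B_def)
  moreover have "xv \<noteq> 0\<^sub>v N"
  proof
    assume "xv = 0\<^sub>v N"
    obtain c where c: "c < N" "b c = i0" using b x(1) by (auto simp: bij_betw_def image_iff)
    then have "xv $ c = 0" using \<open>xv = 0\<^sub>v N\<close> by simp
    then show False using c x(2) by (simp add: xv_def)
  qed
  ultimately have "det B = 0" using det_0_iff_vec_prod_zero[OF Bc] xvc by blast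
  then have "det (transpose_mat B) = 0" using det_transpose[OF Bc] by simp
  then obtain yv where yv: "yv \<in> carrier_vec N" "yv \<noteq> 0\<^sub>v N" "transpose_mat B *\<^sub>v yv = 0\<^sub>v N"
    using det_0_iff_vec_prod_zero[of "transpose_mat B" N] Bc by auto
  define binv where "binv = the_inv_into {0..<N} b"
  have binv: "\<And>i. i \<in> I \<Longrightarrow> binv i < N \<and> b (binv i) = i" "\<And>c. c < N \<Longrightarrow> binv (b c) = c"
    using b unfolding binv_def bij_betw_def
    by (auto simp: f_the_inv_into_f the_inv_into_f_f the_inv_into_into)
  define u where "u = (\<lambda>i. yv $ binv i)"
  show ?thesis
  proof (intro exI conjI ballI)
    obtain c where c: "c < N" "yv $ c \<noteq> 0"
      using yv(1,2) by (metis carrier_vecD eq_vecI index_zero_vec(1,2))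
    show "\<exists>j\<in>I. u j \<noteq> 0"
      using c b binv by (intro bexI[of _ "b c"]) (auto simp: u_def bij_betw_def)
  next
    fix j assume j: "j \<in> I"
    define cj where "cj = binv j"
    have cj: "cj < N" "b cj = j" using binv j by (auto simp: cj_def)
    have "0 = (transpose_mat B *\<^sub>v yv) $ cj" using yv(3) cj by simp
    also have "\<dots> = (\<Sum>r\<in>{0..<N}. (A (b r) (b cj) - (if r = cj then 1 else 0)) * yv $ r)"
      using cj yv(1) by (simp add: B_def scalar_prod_def mult.commute)
    also have "\<dots> = (\<Sum>r\<in>{0..<N}. yv $ r * A (b r) j) - yv $ cj"
    proof -
      have "(\<Sum>r\<in>{0..<N}. yv $ r * (if r = cj then 1 else 0)) = (\<Sum>r\<in>{0..<N}. if r = cj then yv $ r else 0)"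
        by (rule sum.cong) auto
      also have "\<dots> = yv $ cj" using cj by simp
      finally show ?thesis using cj by (simp add: right_diff_distrib sum_subtractf mult.commute)
    qed
    also have "(\<Sum>r\<in>{0..<N}. yv $ r * A (b r) j) = (\<Sum>i\<in>I. u i * A i j)"
      using sumI[of "\<lambda>i. u i * A i j"] binv by (simp add: u_def)
    finally show "(\<Sum>i\<in>I. u i * A i j) = u j" by (simp add: u_def cj_def)
  qed
qed


lemma twisted_infinite:
  fixes G (structure)
  assumes G: "group G" and hom: "\<phi> \<in> hom G G" and T: "T \<subseteq> carrier G"
    and hinv: "\<And>a b c. a \<in> T \<Longrightarrow> b \<in> T \<Longrightarrow> c \<in> carrier G \<Longrightarrow> a = c \<otimes>\<^bsub>G\<^esub> b \<otimes>\<^bsub>G\<^esub> inv\<^bsub>G\<^esub> (\<phi> c) \<Longrightarrow> F a = F b"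
    and inf: "infinite (F ` T)"
  shows "infinite (twisted_classes G \<phi>)"
proof
  assume fin: "finite (twisted_classes G \<phi>)"
  interpret group G by (rule G)
  interpret group_hom G G \<phi> using G hom by (simp add: group_hom_def group_hom_axioms_def)
  define K where "K = (\<lambda>b. {a. \<exists>c\<in>carrier G. a = c \<otimes> b \<otimes> inv (\<phi> c)})"
  have tc: "twisted_classes G \<phi> = K ` carrier G" by (simp add: twisted_classes_def K_def)
  have self: "t \<in> K t" if "t \<in> carrier G" for t
    using that unfolding K_def by (intro CollectI bexI[of _ \<one>]) simp_all
  have "finite (K ` T)" using fin T tc by (metis finite_subset image_mono)
  moreover have "F ` T \<subseteq> (\<lambda>C. F (SOME t. t \<in> T \<and> K t = C)) ` (K ` T)"
  proof
    fix y assume "y \<in> F ` T"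
    then obtain t where t: "t \<in> T" "y = F t" by blast
    define t' where "t' = (SOME s. s \<in> T \<and> K s = K t)"
    have t': "t' \<in> T \<and> K t' = K t" unfolding t'_def by (rule someI[of _ t]) (simp add: t)
    then have "t' \<in> K t" using self T by blast
    then obtain c where "c \<in> carrier G" "t' = c \<otimes> t \<otimes> inv (\<phi> c)" by (auto simp: K_def)
    then have "F t' = F t" using hinv t' t by blast
    then have "y = (\<lambda>C. F (SOME t. t \<in> T \<and> K t = C)) (K t)" using t by (simp add: t'_def)
    moreover have "K t \<in> K ` T" using t by blast
    ultimately show "y \<in> (\<lambda>C. F (SOME t. t \<in> T \<and> K t = C)) ` (K ` T)" by blast
  qed
  ultimately show False using inf by (metis finite_imageI finite_subset)
qed

lemma al_pow: "x \<in> carrier (GG n E) \<Longrightarrow> al n E (x [^]\<^bsub>GG n E\<^esub> (m::nat)) = (\<lambda>i. int m * al n E x i)"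
proof (induction m)
  case 0 then show ?case by (simp add: al_one fun_eq_iff)
next
  case (Suc m)
  interpret group "GG n E" by (rule G_group)
  show ?case using Suc by (simp add: al_mult fun_eq_iff algebra_simps)
qed

lemma eval_pow0: assumes "x \<in> carrier (GG n E)" "al n E x = 0"
  shows "eval n E (x [^]\<^bsub>GG n E\<^esub> (m::nat)) = (0, (\<lambda>q. int m * ta n E x q))"
  using assms(1)
proof (induction m)
  case 0 then show ?case by (simp add: eval_one fun_eq_iff)
next
  case (Suc m)
  interpret group "GG n E" by (rule G_group)
  have "eval n E x = (0, ta n E x)" using assms(2) by (simp add: al_def ta_def prod_eq_iff)
  then show ?case using Suc by (simp add: eval_mult fun_eq_iff algebra_simps)
qed

lemma lemmaA:
  assumes hom: "\<phi> \<in> hom (GG n E) (GG n E)" and k0: "k0 \<in> {1..n}" "u k0 \<noteq> 0"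
    and inv: "\<And>a. (\<Sum>i\<in>{1..n}. u i * Mv n E \<phi> a i) = (\<Sum>i\<in>{1..n}. u i * a i)"
  shows "infinite (twisted_classes (GG n E) \<phi>)"
proof -
  interpret group "GG n E" by (rule G_group)
  define F where "F = (\<lambda>g. \<Sum>i\<in>{1..n}. u i * al n E g i)"
  have Fmult: "F (x \<otimes>\<^bsub>GG n E\<^esub> y) = F x + F y" if "x \<in> carrier (GG n E)" "y \<in> carrier (GG n E)" for x y
    using that by (simp add: F_def al_mult sum.distrib algebra_simps)
  have Finv: "F (inv\<^bsub>GG n E\<^esub> x) = - F x" if "x \<in> carrier (GG n E)" for x
    using that by (simp add: F_def al_inv sum_negf)
  have Fphi: "F (\<phi> x) = F x" if "x \<in> carrier (GG n E)" for x
    using that inv al_phi[OF hom] by (simp add: F_def)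
  show ?thesis
  proof (rule twisted_infinite[OF G_group hom subset_refl, of F])
    fix a b c assume "a \<in> carrier (GG n E)" "b \<in> carrier (GG n E)" "c \<in> carrier (GG n E)"
      and a: "a = c \<otimes>\<^bsub>GG n E\<^esub> b \<otimes>\<^bsub>GG n E\<^esub> inv\<^bsub>GG n E\<^esub> \<phi> c"
    then show "F a = F b" using hom_in_carrier[OF hom]
      by (simp add: Fmult Finv Fphi)
  next
    have Fpow: "F (xg n E k0 [^]\<^bsub>GG n E\<^esub> m) = int m * u k0" for m :: nat
    proof -
      have "F (xg n E k0 [^]\<^bsub>GG n E\<^esub> m) = (\<Sum>i\<in>{1..n}. (int m * u i) * evec k0 i)"
        using xg_carrier[OF k0(1)] k0 by (simp add: F_def al_pow al_xg algebra_simps)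
      also have "\<dots> = int m * u k0" using k0 by (subst sum_evec2) auto
      finally show ?thesis .
    qed
    have "inj (\<lambda>m::nat. int m * u k0)" using k0 by (auto simp: inj_on_def)
    then have "infinite (range (\<lambda>m::nat. int m * u k0))" by (rule range_inj_infinite)
    moreover have "range (\<lambda>m::nat. int m * u k0) \<subseteq> F ` carrier (GG n E)"
    proof
      fix y assume "y \<in> range (\<lambda>m::nat. int m * u k0)"
      then obtain m :: nat where "y = int m * u k0" by blast
      then have "y = F (xg n E k0 [^]\<^bsub>GG n E\<^esub> m)" using Fpow by simp
      moreover have "xg n E k0 [^]\<^bsub>GG n E\<^esub> m \<in> carrier (GG n E)" using xg_carrier[OF k0(1)] by simp
      ultimately show "y \<in> F ` carrier (GG n E)" by blast
    qed
    ultimately show "infinite (F ` carrier (GG n E))" by (metis finite_subset)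
  qed
qed


definition PP :: "nat \<Rightarrow> nat set set \<Rightarrow> (nat \<times> nat) set" where
  "PP n E = {(i,j). nonedge n E i j}"

lemma PP_sub: "PP n E \<subseteq> {1..n} \<times> {1..n}"
  by (auto simp: PP_def nonedge_def)
lemma finite_PP[simp]: "finite (PP n E)"
  using PP_sub by (rule finite_subset) simp

lemma sum_PP: "(\<Sum>p\<in>PP n E. h p) = (\<Sum>k\<in>{1..n}. \<Sum>l\<in>{1..n}. if nonedge n E k l then h (k,l) else 0)"
proof -
  have "PP n E = {p \<in> {1..n} \<times> {1..n}. nonedge n E (fst p) (snd p)}"
    by (auto simp: PP_def nonedge_def)
  then have "(\<Sum>p\<in>PP n E. h p) = (\<Sum>p\<in>{1..n} \<times> {1..n}. if nonedge n E (fst p) (snd p) then h p else 0)"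
    by (simp add: sum.inter_filter)
  also have "\<dots> = (\<Sum>(k,l)\<in>{1..n} \<times> {1..n}. if nonedge n E k l then h (k,l) else 0)"
    by (rule sum.cong) auto
  also have "\<dots> = (\<Sum>k\<in>{1..n}. \<Sum>l\<in>{1..n}. if nonedge n E k l then h (k,l) else 0)"
    by (rule sum.cartesian_product[symmetric])
  finally show ?thesis .
qed

lemma Model_comm2: "inv\<^bsub>Model n E\<^esub> x \<otimes>\<^bsub>Model n E\<^esub> (inv\<^bsub>Model n E\<^esub> y \<otimes>\<^bsub>Model n E\<^esub> (x \<otimes>\<^bsub>Model n E\<^esub> y))
  = (0, omega n E (fst x) (fst y))"
  by (simp add: beta_lin omega_def algebra_simps)

lemma comm_eval: assumes hom: "\<phi> \<in> hom (GG n E) (GG n E)" and x: "x \<in> carrier (GG n E)" and y: "y \<in> carrier (GG n E)"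
  shows "eval n E (\<phi> (inv\<^bsub>GG n E\<^esub> x \<otimes>\<^bsub>GG n E\<^esub> (inv\<^bsub>GG n E\<^esub> y \<otimes>\<^bsub>GG n E\<^esub> (x \<otimes>\<^bsub>GG n E\<^esub> y))))
    = (0, omega n E (al n E (\<phi> x)) (al n E (\<phi> y)))"
proof -
  interpret group "GG n E" by (rule G_group)
  interpret group_hom "GG n E" "GG n E" \<phi> using hom G_group by (simp add: group_hom_def group_hom_axioms_def)
  have px: "\<phi> x \<in> carrier (GG n E)" and py: "\<phi> y \<in> carrier (GG n E)" using x y by auto
  have "\<phi> (inv\<^bsub>GG n E\<^esub> x \<otimes>\<^bsub>GG n E\<^esub> (inv\<^bsub>GG n E\<^esub> y \<otimes>\<^bsub>GG n E\<^esub> (x \<otimes>\<^bsub>GG n E\<^esub> y)))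
    = inv\<^bsub>GG n E\<^esub> \<phi> x \<otimes>\<^bsub>GG n E\<^esub> (inv\<^bsub>GG n E\<^esub> \<phi> y \<otimes>\<^bsub>GG n E\<^esub> (\<phi> x \<otimes>\<^bsub>GG n E\<^esub> \<phi> y))"
    using x y by simp
  moreover have c: "inv\<^bsub>GG n E\<^esub> \<phi> x \<in> carrier (GG n E)" "inv\<^bsub>GG n E\<^esub> \<phi> y \<in> carrier (GG n E)"
    "\<phi> x \<otimes>\<^bsub>GG n E\<^esub> \<phi> y \<in> carrier (GG n E)"
    "inv\<^bsub>GG n E\<^esub> \<phi> y \<otimes>\<^bsub>GG n E\<^esub> (\<phi> x \<otimes>\<^bsub>GG n E\<^esub> \<phi> y) \<in> carrier (GG n E)"
    using px py by auto
  ultimately have "eval n E (\<phi> (inv\<^bsub>GG n E\<^esub> x \<otimes>\<^bsub>GG n E\<^esub> (inv\<^bsub>GG n E\<^esub> y \<otimes>\<^bsub>GG n E\<^esub> (x \<otimes>\<^bsub>GG n E\<^esub> y))))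
     = inv\<^bsub>Model n E\<^esub> eval n E (\<phi> x) \<otimes>\<^bsub>Model n E\<^esub> (inv\<^bsub>Model n E\<^esub> eval n E (\<phi> y) \<otimes>\<^bsub>Model n E\<^esub> (eval n E (\<phi> x) \<otimes>\<^bsub>Model n E\<^esub> eval n E (\<phi> y)))"
    by (simp only: eval_mult[OF c(1) c(4)] eval_mult[OF c(2) c(3)] eval_mult[OF px py] eval_inv[OF px] eval_inv[OF py])
  also have "\<dots> = (0, omega n E (al n E (\<phi> x)) (al n E (\<phi> y)))"
    by (simp only: Model_comm2 al_def)
  finally show ?thesis .
qed

definition Wv :: "nat \<Rightarrow> nat set set \<Rightarrow> (gen word set \<Rightarrow> gen word set) \<Rightarrow> nat \<times> nat \<Rightarrow> nat \<times> nat \<Rightarrow> int" where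
  "Wv n E \<phi> p = snd (eval n E (\<phi> (yg n E (fst p) (snd p))))"

definition Lam :: "nat \<Rightarrow> nat set set \<Rightarrow> (gen word set \<Rightarrow> gen word set) \<Rightarrow> (nat \<times> nat \<Rightarrow> int) \<Rightarrow> nat \<times> nat \<Rightarrow> int" where
  "Lam n E \<phi> t = (\<lambda>q. \<Sum>p\<in>PP n E. t p * Wv n E \<phi> p q)"

lemma Wv_eq: assumes hom: "\<phi> \<in> hom (GG n E) (GG n E)" and p: "nonedge n E i j"
  shows "Wv n E \<phi> (i,j) = omega n E (Mt n E \<phi> j) (Mt n E \<phi> i)"
    and "al n E (\<phi> (yg n E i j)) = 0"
proof -
  have ij: "i \<in> {1..n}" "j \<in> {1..n}" using p by (auto simp: nonedge_def)
  have e: "eval n E (\<phi> (yg n E i j)) = (0, omega n E (Mt n E \<phi> j) (Mt n E \<phi> i))"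
    using comm_eval[OF hom xg_carrier[OF ij(2)] xg_carrier[OF ij(1)]] G_rel_nonedge[OF p]
    by (simp add: Mt_def)
  show "Wv n E \<phi> (i,j) = omega n E (Mt n E \<phi> j) (Mt n E \<phi> i)" using e by (simp add: Wv_def)
  show "al n E (\<phi> (yg n E i j)) = 0" using e by (simp add: al_def)
qed

lemma Om_edge: assumes hom: "\<phi> \<in> hom (GG n E) (GG n E)" and ij: "i \<in> {1..n}" "j \<in> {1..n}" "i < j" "{i,j} \<in> E"
  shows "omega n E (Mt n E \<phi> j) (Mt n E \<phi> i) = 0"
proof -
  interpret group "GG n E" by (rule G_group)
  interpret group_hom "GG n E" "GG n E" \<phi> using hom G_group by (simp add: group_hom_def group_hom_axioms_def)
  show ?thesis
    using comm_eval[OF hom xg_carrier[OF ij(2)] xg_carrier[OF ij(1)]] G_rel_edge[OF ij] eval_one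
    by (simp add: Mt_def)
qed

lemma omega_antisym: "omega n E a b = - omega n E b a"
  by (simp add: omega_def)
lemma omega_self[simp]: "omega n E a a = 0"
  by (simp add: omega_def)

lemma omega_at: "omega n E a b (p, q) = (if nonedge n E p q then a q * b p - b q * a p else 0)"
  by (simp add: omega_def beta_def)

lemma Om_any_edge: assumes hom: "\<phi> \<in> hom (GG n E) (GG n E)" and kl: "k \<in> {1..n}" "l \<in> {1..n}" "k \<noteq> l" "{k,l} \<in> E"
  shows "omega n E (Mt n E \<phi> k) (Mt n E \<phi> l) = 0"
proof (cases "k < l")
  case True
  then show ?thesis using Om_edge[OF hom kl(1,2) True] kl(4) omega_antisym by (metis neg_equal_0_iff_equal)
next
  case False
  then have "l < k" using kl(3) by simp
  then show ?thesis using Om_edge[OF hom kl(2,1)] kl(4) by (simp add: insert_commute)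
qed


lemma pairing:
  fixes X :: "nat \<Rightarrow> nat \<Rightarrow> int"
  assumes "\<And>k. X k k = 0"
  shows "(\<Sum>k\<in>N. \<Sum>l\<in>N. X k l) = (\<Sum>k\<in>N. \<Sum>l\<in>N. if k < l then X k l + X l k else 0)"
proof -
  have "(\<Sum>k\<in>N. \<Sum>l\<in>N. X k l) = (\<Sum>k\<in>N. \<Sum>l\<in>N. (if k < l then X k l else 0) + (if l < k then X k l else 0))"
    using assms by (intro sum.cong refl) (auto simp: not_less_iff_gr_or_eq)
  also have "\<dots> = (\<Sum>k\<in>N. \<Sum>l\<in>N. if k < l then X k l else 0) + (\<Sum>k\<in>N. \<Sum>l\<in>N. if l < k then X k l else 0)"
    by (simp add: sum.distrib)
  also have "(\<Sum>k\<in>N. \<Sum>l\<in>N. if l < k then X k l else 0) = (\<Sum>l\<in>N. \<Sum>k\<in>N. if l < k then X k l else 0)"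
    by (rule sum.swap)
  also have "(\<Sum>k\<in>N. \<Sum>l\<in>N. if k < l then X k l else 0) + (\<Sum>l\<in>N. \<Sum>k\<in>N. if l < k then X k l else 0)
      = (\<Sum>k\<in>N. \<Sum>l\<in>N. if k < l then X k l + X l k else 0)"
    by (simp only: sum.distrib[symmetric]) (intro sum.cong refl, simp)
  finally show ?thesis .
qed

lemma sym_id: assumes hom: "\<phi> \<in> hom (GG n E) (GG n E)"
  shows "omega n E (Mv n E \<phi> a) (Mv n E \<phi> b) = Lam n E \<phi> (omega n E a b)"
proof
  fix r :: "nat \<times> nat"
  obtain r1 r2 where r: "r = (r1, r2)" by force
  define Om where "Om = (\<lambda>k l. omega n E (Mt n E \<phi> k) (Mt n E \<phi> l) r)"
  have Wv_r: "Wv n E \<phi> (k,l) r = Om l k" if "nonedge n E k l" for k l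
    using Wv_eq(1)[OF hom that] by (simp add: Om_def)
  show "omega n E (Mv n E \<phi> a) (Mv n E \<phi> b) r = Lam n E \<phi> (omega n E a b) r"
  proof (cases "nonedge n E r1 r2")
    case False
    have "Lam n E \<phi> (omega n E a b) r = (\<Sum>p\<in>PP n E. omega n E a b p * Wv n E \<phi> p r)"
      by (simp add: Lam_def)
    also have "\<dots> = 0"
    proof (rule sum.neutral, rule ballI)
      fix p assume "p \<in> PP n E"
      then obtain k l where p: "p = (k,l)" "nonedge n E k l" by (auto simp: PP_def)
      show "omega n E a b p * Wv n E \<phi> p r = 0"
        using Wv_r[OF p(2)] False by (simp add: p Om_def r omega_at)
    qed
    finally show ?thesis using False by (simp add: r omega_at)
  next
    case True
    have OmE: "Om k l = Mt n E \<phi> k r2 * Mt n E \<phi> l r1 - Mt n E \<phi> l r2 * Mt n E \<phi> k r1" for k l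
      using True by (simp add: Om_def r omega_at)
    have "omega n E (Mv n E \<phi> a) (Mv n E \<phi> b) r = Mv n E \<phi> a r2 * Mv n E \<phi> b r1 - Mv n E \<phi> b r2 * Mv n E \<phi> a r1"
      using True by (simp add: r omega_at)
    also have "\<dots> = (\<Sum>k\<in>{1..n}. \<Sum>l\<in>{1..n}. (a k * Mt n E \<phi> k r2) * (b l * Mt n E \<phi> l r1))
                 - (\<Sum>k\<in>{1..n}. \<Sum>l\<in>{1..n}. (a k * Mt n E \<phi> k r1) * (b l * Mt n E \<phi> l r2))"
      by (simp add: Mv_def sum_product mult.commute)
    also have "\<dots> = (\<Sum>k\<in>{1..n}. \<Sum>l\<in>{1..n}. a k * b l * Om k l)"
      by (simp add: OmE sum_subtractf[symmetric] algebra_simps)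
    also have "\<dots> = (\<Sum>k\<in>{1..n}. \<Sum>l\<in>{1..n}. if k < l then a k * b l * Om k l + a l * b k * Om l k else 0)"
      by (rule pairing) (simp add: Om_def)
    also have "\<dots> = (\<Sum>k\<in>{1..n}. \<Sum>l\<in>{1..n}. if nonedge n E k l then omega n E a b (k,l) * Wv n E \<phi> (k,l) r else 0)"
    proof (intro sum.cong refl)
      fix k l assume k: "k \<in> {1..n}" and l: "l \<in> {1..n}"
      have anti: "Om l k = - Om k l" unfolding Om_def by (subst omega_antisym) simp
      show "(if k < l then a k * b l * Om k l + a l * b k * Om l k else 0) =
            (if nonedge n E k l then omega n E a b (k,l) * Wv n E \<phi> (k,l) r else 0)"
      proof (cases "nonedge n E k l")
        case True
        then have "k < l" by (simp add: nonedge_def)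
        then show ?thesis using True Wv_r[OF True] anti by (simp add: omega_at algebra_simps)
      next
        case False
        show ?thesis
        proof (cases "k < l")
          case True
          then have "{k,l} \<in> E" using False k l by (simp add: nonedge_def)
          then have "Om k l = 0" using Om_any_edge[OF hom k l] True by (simp add: Om_def)
          then show ?thesis using anti False by simp
        qed (use False in simp)
      qed
    qed
    also have "\<dots> = Lam n E \<phi> (omega n E a b) r"
      by (simp add: Lam_def sum_PP)
    finally show ?thesis .
  qed
qed


lemma Lam_add: "Lam n E \<phi> (s + t) = Lam n E \<phi> s + Lam n E \<phi> t"
  by (simp add: Lam_def fun_eq_iff sum.distrib algebra_simps)
lemma Lam_diff: "Lam n E \<phi> (s - t) = Lam n E \<phi> s - Lam n E \<phi> t"
  by (simp add: Lam_def fun_eq_iff sum_subtractf algebra_simps)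
lemma Lam_zero[simp]: "Lam n E \<phi> 0 = 0"
  by (simp add: Lam_def fun_eq_iff)
lemma Mv_zero[simp]: "Mv n E \<phi> 0 = 0"
  by (simp add: Mv_def fun_eq_iff)

lemma ta_mult: "x \<in> carrier (GG n E) \<Longrightarrow> y \<in> carrier (GG n E) \<Longrightarrow>
  ta n E (x \<otimes>\<^bsub>GG n E\<^esub> y) = ta n E x + ta n E y + beta n E (al n E x) (al n E y)"
  by (simp add: ta_def al_def eval_mult)

lemma key: assumes hom: "\<phi> \<in> hom (GG n E) (GG n E)" and c: "c \<in> carrier (GG n E)" and c0: "al n E c = 0"
  shows "snd (eval n E (\<phi> c)) = Lam n E \<phi> (ta n E c)"
proof -
  define sg where "sg = (\<lambda>g. snd (eval n E (\<phi> g)))"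
  define B where "B = (\<lambda>a b. beta n E (Mv n E \<phi> a) (Mv n E \<phi> b) - Lam n E \<phi> (beta n E a b))"
  define D where "D = (\<lambda>g. sg g + sg g - Lam n E \<phi> (ta n E g) - Lam n E \<phi> (ta n E g) - B (al n E g) (al n E g))"
  have sg_mult: "sg (x \<otimes>\<^bsub>GG n E\<^esub> y) = sg x + sg y + beta n E (Mv n E \<phi> (al n E x)) (Mv n E \<phi> (al n E y))"
    if "x \<in> carrier (GG n E)" "y \<in> carrier (GG n E)" for x y
  proof -
    have "eval n E (\<phi> (x \<otimes>\<^bsub>GG n E\<^esub> y)) = eval n E (\<phi> x) \<otimes>\<^bsub>Model n E\<^esub> eval n E (\<phi> y)"
      using that hom_in_carrier[OF hom] hom_mult[OF hom] eval_mult by metis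
    then show ?thesis using that al_phi[OF hom] by (simp add: sg_def al_def)
  qed
  have Bsym: "B a b = B b a" for a b
  proof -
    have "B a b - B b a = omega n E (Mv n E \<phi> a) (Mv n E \<phi> b) - Lam n E \<phi> (omega n E a b)"
      by (simp add: B_def omega_def Lam_diff)
    then show ?thesis using sym_id[OF hom] by simp
  qed
  have Bexp: "B (a + b) (a + b) = B a a + B a b + B a b + B b b" for a b
  proof -
    have "B (a + b) (a + b) = B a a + B a b + B b a + B b b"
      by (simp add: B_def Mv_add beta_add1 beta_add2 Lam_add algebra_simps)
    then show ?thesis using Bsym[of b a] by simp
  qed
  have Dmult: "D (x \<otimes>\<^bsub>GG n E\<^esub> y) = D x + D y" if "x \<in> carrier (GG n E)" "y \<in> carrier (GG n E)" for x y
  proof -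
    have "D (x \<otimes>\<^bsub>GG n E\<^esub> y) = (sg x + sg y + beta n E (Mv n E \<phi> (al n E x)) (Mv n E \<phi> (al n E y)))
       + (sg x + sg y + beta n E (Mv n E \<phi> (al n E x)) (Mv n E \<phi> (al n E y)))
       - (Lam n E \<phi> (ta n E x) + Lam n E \<phi> (ta n E y) + Lam n E \<phi> (beta n E (al n E x) (al n E y)))
       - (Lam n E \<phi> (ta n E x) + Lam n E \<phi> (ta n E y) + Lam n E \<phi> (beta n E (al n E x) (al n E y)))
       - (B (al n E x) (al n E x) + B (al n E x) (al n E y) + B (al n E x) (al n E y) + B (al n E y) (al n E y))"
      unfolding D_def sg_mult[OF that] ta_mult[OF that] al_mult[OF that] Lam_add Bexp ..
    also have "\<dots> = D x + D y"
      unfolding D_def B_def by (simp add: algebra_simps)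
    finally show ?thesis .
  qed
  have "(\<lambda>g. D g - (\<lambda>q. \<Sum>l\<in>{1..n}. al n E g l * D (xg n E l) q)) c = 0"
  proof (rule add_zero[OF _ _ c])
    fix x y assume xy: "x \<in> carrier (GG n E)" "y \<in> carrier (GG n E)"
    have "(\<lambda>q. \<Sum>l\<in>{1..n}. al n E (x \<otimes>\<^bsub>GG n E\<^esub> y) l * D (xg n E l) q) =
      (\<lambda>q. \<Sum>l\<in>{1..n}. al n E x l * D (xg n E l) q) + (\<lambda>q. \<Sum>l\<in>{1..n}. al n E y l * D (xg n E l) q)"
      using xy by (simp add: al_mult fun_eq_iff distrib_right sum.distrib)
    then show "D (x \<otimes>\<^bsub>GG n E\<^esub> y) - (\<lambda>q. \<Sum>l\<in>{1..n}. al n E (x \<otimes>\<^bsub>GG n E\<^esub> y) l * D (xg n E l) q) =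
      (D x - (\<lambda>q. \<Sum>l\<in>{1..n}. al n E x l * D (xg n E l) q)) + (D y - (\<lambda>q. \<Sum>l\<in>{1..n}. al n E y l * D (xg n E l) q))"
      using Dmult[OF xy] by (simp add: algebra_simps)
  next
    fix l :: nat assume l: "l \<in> {1..n}"
    have "(\<lambda>q. \<Sum>k\<in>{1..n}. al n E (xg n E l) k * D (xg n E k) q) = D (xg n E l)"
    proof
      fix q show "(\<Sum>k\<in>{1..n}. al n E (xg n E l) k * D (xg n E k) q) = D (xg n E l) q"
        using l by (subst al_xg[OF l]) (subst sum_evec, auto)
    qed
    then show "D (xg n E l) - (\<lambda>q. \<Sum>k\<in>{1..n}. al n E (xg n E l) k * D (xg n E k) q) = 0" by simp
  qed
  then have "D c = 0" using c0 by (simp add: zero_fun_def)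
  then have "sg c + sg c - Lam n E \<phi> (ta n E c) - Lam n E \<phi> (ta n E c) = 0"
    using c0 by (simp add: D_def B_def)
  then show ?thesis by (simp add: sg_def fun_eq_iff algebra_simps)
qed


lemma lemmaB:
  assumes hom: "\<phi> \<in> hom (GG n E) (GG n E)"
    and nofix: "\<And>a. (\<And>i. i \<notin> {1..n} \<Longrightarrow> a i = 0) \<Longrightarrow> Mv n E \<phi> a = a \<Longrightarrow> a = 0"
    and p1: "p1 \<in> PP n E" "f p1 \<noteq> 0"
    and leig: "\<And>t. (\<Sum>q\<in>PP n E. f q * Lam n E \<phi> t q) = (\<Sum>q\<in>PP n E. f q * t q)"
  shows "infinite (twisted_classes (GG n E) \<phi>)"
proof -
  interpret group "GG n E" by (rule G_group)
  define T where "T = {g \<in> carrier (GG n E). al n E g = 0}"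
  define F where "F = (\<lambda>g. \<Sum>q\<in>PP n E. f q * ta n E g q)"
  obtain i1 j1 where ij1: "p1 = (i1, j1)" "nonedge n E i1 j1" using p1 by (auto simp: PP_def)
  show ?thesis
  proof (rule twisted_infinite[OF G_group hom, of T F])
    show "T \<subseteq> carrier (GG n E)" by (auto simp: T_def)
  next
    fix a b c assume a: "a \<in> T" and b: "b \<in> T" and c: "c \<in> carrier (GG n E)"
      and eq: "a = c \<otimes>\<^bsub>GG n E\<^esub> b \<otimes>\<^bsub>GG n E\<^esub> inv\<^bsub>GG n E\<^esub> \<phi> c"
    have ac: "a \<in> carrier (GG n E)" "al n E a = 0" and bc: "b \<in> carrier (GG n E)" "al n E b = 0"
      using a b by (auto simp: T_def)
    have pc: "\<phi> c \<in> carrier (GG n E)" using hom_in_carrier[OF hom c] .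
    have cb: "c \<otimes>\<^bsub>GG n E\<^esub> b \<in> carrier (GG n E)" "inv\<^bsub>GG n E\<^esub> \<phi> c \<in> carrier (GG n E)"
      using c bc pc by auto
    have "al n E a = al n E (c \<otimes>\<^bsub>GG n E\<^esub> b) + al n E (inv\<^bsub>GG n E\<^esub> \<phi> c)"
      using eq cb by (simp only: al_mult)
    also have "\<dots> = al n E c + al n E b - Mv n E \<phi> (al n E c)"
      using c bc pc by (simp only: al_mult al_inv al_phi[OF hom c] diff_conv_add_uminus)
    finally have "Mv n E \<phi> (al n E c) = al n E c" using ac bc by simp
    then have c0: "al n E c = 0" using nofix[of "al n E c"] al_supp[OF c] by blast
    have ec: "eval n E c = (0, ta n E c)" using c0 by (simp add: al_def ta_def prod_eq_iff)
    have eb: "eval n E b = (0, ta n E b)" using bc by (simp add: al_def ta_def prod_eq_iff)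
    have epc: "eval n E (\<phi> c) = (0, Lam n E \<phi> (ta n E c))"
      using key[OF hom c c0] al_phi[OF hom c] c0 by (simp add: al_def prod_eq_iff)
    have "eval n E a = eval n E c \<otimes>\<^bsub>Model n E\<^esub> eval n E b \<otimes>\<^bsub>Model n E\<^esub> inv\<^bsub>Model n E\<^esub> eval n E (\<phi> c)"
      using eq cb c bc pc by (simp only: eval_mult eval_inv)
    then have "eval n E a = (0, ta n E c) \<otimes>\<^bsub>Model n E\<^esub> (0, ta n E b) \<otimes>\<^bsub>Model n E\<^esub> inv\<^bsub>Model n E\<^esub> (0, Lam n E \<phi> (ta n E c))"
      by (simp only: ec eb epc)
    then have "snd (eval n E a) = ta n E c + ta n E b - Lam n E \<phi> (ta n E c)"
      by simp
    then have "ta n E a = ta n E c + ta n E b - Lam n E \<phi> (ta n E c)"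
      by (simp only: ta_def)
    then have tq: "\<And>q. ta n E a q = ta n E c q + ta n E b q - Lam n E \<phi> (ta n E c) q" by simp
    have "F a = F c + F b - (\<Sum>q\<in>PP n E. f q * Lam n E \<phi> (ta n E c) q)"
      unfolding F_def tq by (simp add: sum.distrib sum_subtractf right_diff_distrib distrib_left)
    then show "F a = F b"
      using leig[of "ta n E c"] by (simp add: F_def)
  next
    have yc: "yg n E i1 j1 \<in> carrier (GG n E)" using yg_carrier[OF ij1(2)] .
    have y0: "al n E (yg n E i1 j1) = 0" using eval_yg[OF ij1(2)] by (simp add: al_def)
    have Fpow: "F (yg n E i1 j1 [^]\<^bsub>GG n E\<^esub> m) = int m * f p1" for m :: nat
    proof -
      have "ta n E (yg n E i1 j1 [^]\<^bsub>GG n E\<^esub> m) = (\<lambda>q. int m * pvec p1 q)"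
        using eval_pow0[OF yc y0, of m] eval_yg[OF ij1(2)] ij1(1) by (simp add: ta_def)
      then have "F (yg n E i1 j1 [^]\<^bsub>GG n E\<^esub> m) = (\<Sum>q\<in>PP n E. if q = p1 then int m * f p1 else 0)"
        unfolding F_def by (intro sum.cong refl) (auto simp: pvec_def)
      also have "\<dots> = int m * f p1" using p1(1) by simp
      finally show ?thesis .
    qed
    have inT: "yg n E i1 j1 [^]\<^bsub>GG n E\<^esub> (m::nat) \<in> T" for m
      using yc y0 by (simp add: T_def al_pow zero_fun_def)
    have "inj (\<lambda>m::nat. int m * f p1)" using p1 by (auto simp: inj_on_def)
    then have "infinite (range (\<lambda>m::nat. int m * f p1))" by (rule range_inj_infinite)
    moreover have "range (\<lambda>m::nat. int m * f p1) \<subseteq> F ` T"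
    proof
      fix y assume "y \<in> range (\<lambda>m::nat. int m * f p1)"
      then obtain m :: nat where "y = int m * f p1" by blast
      then have "y = F (yg n E i1 j1 [^]\<^bsub>GG n E\<^esub> m)" using Fpow by simp
      then show "y \<in> F ` T" using inT by blast
    qed
    ultimately show "infinite (F ` T)" by (metis finite_subset)
  qed
qed



hide_const (open) Polynomial.degree

definition NN :: "nat \<Rightarrow> nat set set \<Rightarrow> nat \<Rightarrow> nat set" where
  "NN n E k = {j \<in> {1..n}. j \<noteq> k \<and> {k, j} \<notin> E}"

lemma NN_card: assumes sg: "simple_graph n E" and k: "k \<in> {1..n}"
  shows "card (NN n E k) + degree n E k + 1 = n"
proof -
  define Nb where "Nb = {j \<in> {1..n}. {k, j} \<in> E}"
  have kk: "{k, k} \<notin> E"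
  proof
    assume "{k,k} \<in> E"
    then obtain i j where "{k,k} = {i,j}" "i \<noteq> j" using sg unfolding simple_graph_def by blast
    then show False by (metis doubleton_eq_iff)
  qed
  have sub: "Nb \<subseteq> {1..n} - {k}" using kk by (auto simp: Nb_def)
  have NNeq: "NN n E k = ({1..n} - {k}) - Nb" by (auto simp: NN_def Nb_def)
  have "card (NN n E k) = card ({1..n} - {k}) - card Nb"
    unfolding NNeq using sub by (simp add: card_Diff_subset finite_subset)
  moreover have "card ({1..n} - {k}) = n - 1" using k by simp
  moreover have "card Nb \<le> n - 1" using sub card_mono[OF _ sub] k by simp
  moreover have "degree n E k = card Nb" by (simp add: Defs.degree_def Nb_def)
  ultimately show ?thesis using k by auto
qed

lemma NN_nonedge: assumes "j \<in> NN n E k" "k \<in> {1..n}"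
  shows "nonedge n E (min k j) (max k j)"
  using assms by (auto simp: NN_def nonedge_def min_def max_def insert_commute)

lemma nonedge_NN: assumes "nonedge n E p q"
  shows "q \<in> NN n E p" "p \<in> NN n E q"
  using assms by (auto simp: NN_def nonedge_def insert_commute)

lemma two_elems: assumes "finite A" "2 \<le> card A" shows "\<exists>a b. a \<in> A \<and> b \<in> A \<and> a \<noteq> b"
proof -
  obtain a where a: "a \<in> A" using assms by fastforce
  have "card (A - {a}) \<ge> 1" using assms a by simp
  then have "A - {a} \<noteq> {}" by (metis card.empty not_one_le_zero)
  then obtain b where "b \<in> A - {a}" by blast
  then show ?thesis using a by blast
qed

locale ctx =
  fixes n E \<phi> v
  assumes sg: "simple_graph n E" and degs: "\<forall>i\<in>{1..n}. degree n E i + 2 \<le> n"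
    and v: "v \<in> {1..n}" "degree n E v + 2 = n"
    and uniq: "\<And>i. i \<in> {1..n} \<Longrightarrow> degree n E i + 2 = n \<Longrightarrow> i = v"
    and iso: "\<phi> \<in> iso (G_Gamma n E) (G_Gamma n E)"
begin



lemma NNv: "\<exists>w. NN n E v = {w}"
proof -
  have "card (NN n E v) = 1" using NN_card[OF sg v(1)] v by simp
  then show ?thesis by (rule card_1_singletonE) blast
qed

definition "w = (THE w. NN n E v = {w})"

lemma NNw: "NN n E v = {w}"
  using NNv unfolding w_def by (metis (mono_tags, lifting) the_equality singleton_inject)

lemma w: "w \<in> {1..n}" "w \<noteq> v" "{v, w} \<notin> E"
  using NNw by (auto simp: NN_def)

lemma nbr_v: "j \<in> {1..n} \<Longrightarrow> j \<noteq> v \<Longrightarrow> j \<noteq> w \<Longrightarrow> {v, j} \<in> E"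
  using NNw by (auto simp: NN_def)

lemma two_NN: assumes "k \<in> {1..n}" "k \<noteq> v"
  shows "\<exists>j1 j2. j1 \<in> NN n E k \<and> j2 \<in> NN n E k \<and> j1 \<noteq> j2"
proof -
  have "degree n E k + 2 \<noteq> n" using uniq assms by blast
  then have "degree n E k + 3 \<le> n" using degs assms by fastforce
  then have "2 \<le> card (NN n E k)" using NN_card[OF sg assms(1)] by simp
  moreover have "finite (NN n E k)" by (simp add: NN_def)
  ultimately show ?thesis using two_elems by blast
qed

lemma nonedge_v: assumes "nonedge n E q1 q2"
  shows "(q1 = v \<longrightarrow> q2 = w) \<and> (q2 = v \<longrightarrow> q1 = w)"
  using nonedge_NN[OF assms] NNw by auto

definition "\<psi> = inv_into (carrier (G_Gamma n E)) \<phi>"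

lemma hom: "\<phi> \<in> hom (G_Gamma n E) (G_Gamma n E)" using iso by (simp add: iso_def)
lemma psi_iso: "\<psi> \<in> iso (G_Gamma n E) (G_Gamma n E)"
  unfolding \<psi>_def using group.iso_set_sym[OF G_group iso] .
lemma hom_psi: "\<psi> \<in> hom (G_Gamma n E) (G_Gamma n E)" using psi_iso by (simp add: iso_def)
lemma phi_psi: assumes "g \<in> carrier (G_Gamma n E)" shows "\<phi> (\<psi> g) = g"
proof -
  have "\<phi> ` carrier (G_Gamma n E) = carrier (G_Gamma n E)" using iso by (simp add: iso_def bij_betw_def)
  then show ?thesis unfolding \<psi>_def using f_inv_into_f[of g \<phi> "carrier (G_Gamma n E)"] assms by simp
qed
lemma psi_phi: "g \<in> carrier (G_Gamma n E) \<Longrightarrow> \<psi> (\<phi> g) = g"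
  unfolding \<psi>_def using iso by (auto simp: iso_def bij_betw_def intro: inv_into_f_f)

end


lemma Mv_smult: "Mv n E \<phi> (\<lambda>i. c * a i) = (\<lambda>i. c * Mv n E \<phi> a i)"
  by (simp add: Mv_def sum_distrib_left mult.assoc)

lemma omega_Mv: "omega n E a (Mv n E \<phi> b) r = (\<Sum>k\<in>{1..n}. b k * omega n E a (Mt n E \<phi> k) r)"
proof -
  obtain r1 r2 where r: "r = (r1, r2)" by force
  show ?thesis
  proof (cases "nonedge n E r1 r2")
    case True
    then show ?thesis
      by (simp add: r omega_at Mv_def sum_distrib_left sum_subtractf[symmetric] algebra_simps)
  qed (simp add: r omega_at)
qed

lemma om_ev: assumes "j \<in> NN n E k" "k \<in> {1..n}"
  shows "omega n E a (evec j) (min k j, max k j) = (if k < j then - a k else a k)"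
proof -
  have "j \<noteq> k" using assms by (simp add: NN_def)
  then show ?thesis using NN_nonedge[OF assms]
    by (cases "k < j") (auto simp: omega_at evec_def min_def max_def)
qed

lemma om_ev0: assumes "j \<noteq> k" "j \<noteq> j2"
  shows "omega n E a (evec j) (min k j2, max k j2) = 0"
  using assms by (auto simp: omega_at evec_def min_def max_def)

context ctx
begin

definition "u = Mt n E \<phi> v"

lemma u_carrier: "\<phi> (xg n E v) \<in> carrier (G_Gamma n E)"
  using hom_in_carrier[OF hom xg_carrier[OF v(1)]] .

lemma omega_u_zero: assumes "j \<in> {1..n}" "j \<noteq> w" shows "omega n E u (Mt n E \<phi> j) = 0"
proof (cases "j = v")
  case True then show ?thesis by (simp add: u_def)
next
  case False
  then show ?thesis using Om_any_edge[OF hom v(1) assms(1)] nbr_v[OF assms(1) False assms(2)]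
    by (simp add: u_def)
qed

lemma omega_u_Mv: "omega n E u (Mv n E \<phi> b) r = b w * omega n E u (Mt n E \<phi> w) r"
proof -
  have "omega n E u (Mv n E \<phi> b) r = (\<Sum>k\<in>{1..n}. if k = w then b w * omega n E u (Mt n E \<phi> w) r else 0)"
    unfolding omega_Mv by (intro sum.cong refl) (auto simp: omega_u_zero)
  also have "\<dots> = b w * omega n E u (Mt n E \<phi> w) r" using w(1) by simp
  finally show ?thesis .
qed

lemma evec_supp: "j \<in> {1..n} \<Longrightarrow> i \<notin> {1..n} \<Longrightarrow> evec j i = 0"
  by (auto simp: evec_def)

lemma omega_u_evec: assumes j: "j \<in> {1..n}"
  shows "omega n E u (evec j) r = Mt n E \<psi> j w * omega n E u (Mt n E \<phi> w) r"
proof -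
  have "evec j = Mv n E \<phi> (Mv n E \<psi> (evec j))"
    using Mv_comp[OF hom hom_psi phi_psi, of "evec j"] evec_supp[OF j] by simp
  also have "\<dots> = Mv n E \<phi> (Mt n E \<psi> j)" using Mv_evec[OF j] by simp
  finally show ?thesis using omega_u_Mv by metis
qed

lemma u_supp: assumes "k \<noteq> v" shows "u k = 0"
proof (cases "k \<in> {1..n}")
  case False then show ?thesis using al_supp[OF u_carrier False] by (simp add: u_def Mt_def)
next
  case True
  show ?thesis
  proof (rule ccontr)
    assume uk: "u k \<noteq> 0"
    obtain j1 j2 where j: "j1 \<in> NN n E k" "j2 \<in> NN n E k" "j1 \<noteq> j2" using two_NN[OF True assms] by blast
    have j1n: "j1 \<in> {1..n}" "j1 \<noteq> k" and j2n: "j2 \<in> {1..n}" "j2 \<noteq> k" using j by (auto simp: NN_def)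
    define C where "C = omega n E u (Mt n E \<phi> w)"
    have "omega n E u (evec j1) (min k j1, max k j1) \<noteq> 0"
      using om_ev[OF j(1) True, of u] uk by simp
    then have "Mt n E \<psi> j1 w * C (min k j1, max k j1) \<noteq> 0"
      using omega_u_evec[OF j1n(1), of "(min k j1, max k j1)"] by (simp add: C_def)
    then have l1: "Mt n E \<psi> j1 w \<noteq> 0" by auto
    have "Mt n E \<psi> j1 w * C (min k j2, max k j2) = 0"
      using omega_u_evec[OF j1n(1), of "(min k j2, max k j2)"] om_ev0[of j1 k j2 n E u] j1n j(3)
      by (simp add: C_def)
    then have "C (min k j2, max k j2) = 0" using l1 by simp
    then have "omega n E u (evec j2) (min k j2, max k j2) = 0"
      using omega_u_evec[OF j2n(1), of "(min k j2, max k j2)"] by (simp add: C_def)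
    then show False using om_ev[OF j(2) True, of u] uk by (simp split: if_splits)
  qed
qed

lemma u_eq: "u = (\<lambda>i. u v * evec v i)"
  using u_supp by (auto simp: fun_eq_iff evec_def)

lemma delta: "u v = 1 \<or> u v = -1"
proof -
  have "Mv n E \<psi> (Mv n E \<phi> (evec v)) = evec v"
    using Mv_comp[OF hom_psi hom psi_phi, of "evec v"] evec_supp[OF v(1)] by simp
  moreover have "Mv n E \<phi> (evec v) = (\<lambda>i. u v * evec v i)"
    using Mv_evec[OF v(1)] u_eq by (simp add: u_def)
  ultimately have "(\<lambda>i. u v * Mv n E \<psi> (evec v) i) = evec v" by (simp add: Mv_smult)
  then have "u v * Mv n E \<psi> (evec v) v = 1" by (metis evec_def)
  then show ?thesis by (rule pos_zmult_eq_1_iff_lemma)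
qed

definition "pv = (min v w, max v w)"

lemma pv_nonedge: "nonedge n E (fst pv) (snd pv)"
  using NN_nonedge[of w n E v] NNw v(1) by (simp add: pv_def)

lemma pv_PP: "pv \<in> PP n E"
  using pv_nonedge by (simp add: PP_def case_prod_beta)

lemma Mt_w_zero: assumes "j \<in> {1..n}" "j \<noteq> w" shows "Mt n E \<phi> j w = 0"
proof -
  have "omega n E u (Mt n E \<phi> j) pv = 0" using omega_u_zero[OF assms] by simp
  moreover have "u v \<noteq> 0" using delta by auto
  ultimately show ?thesis using pv_nonedge w(2)
    by (subst (asm) u_eq) (cases "v < w"; auto simp: pv_def omega_at evec_def min_def max_def)
qed

definition "eps = Mt n E \<phi> w w"

lemma Mv_w: "Mv n E \<phi> a w = a w * eps"
proof -
  have "Mv n E \<phi> a w = (\<Sum>k\<in>{1..n}. if k = w then a w * eps else 0)"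
    unfolding Mv_def eps_def by (intro sum.cong refl) (auto simp: Mt_w_zero)
  then show ?thesis using w(1) by simp
qed

lemma eps: "eps = 1 \<or> eps = -1"
proof -
  have "Mv n E \<phi> (Mv n E \<psi> (evec w)) = evec w"
    using Mv_comp[OF hom hom_psi phi_psi, of "evec w"] evec_supp[OF w(1)] by simp
  then have "Mv n E \<psi> (evec w) w * eps = 1" using Mv_w by (metis evec_def)
  then have "eps * Mv n E \<psi> (evec w) w = 1" by (simp add: mult.commute)
  then show ?thesis by (rule pos_zmult_eq_1_iff_lemma)
qed

lemma Wv_pv: assumes q: "q \<in> PP n E" shows "Wv n E \<phi> pv q = u v * eps * pvec pv q"
proof -
  obtain q1 q2 where qq: "q = (q1, q2)" "nonedge n E q1 q2" using q by (auto simp: PP_def)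
  have qv: "(q1 = v \<longrightarrow> q2 = w) \<and> (q2 = v \<longrightarrow> q1 = w)" using nonedge_v[OF qq(2)] .
  have q12: "q1 < q2" using qq(2) by (simp add: nonedge_def)
  have W: "Wv n E \<phi> pv = omega n E (Mt n E \<phi> (snd pv)) (Mt n E \<phi> (fst pv))"
    using Wv_eq(1)[OF hom pv_nonedge] by simp
  have Mtv: "Mt n E \<phi> v = (\<lambda>i. u v * evec v i)" using u_eq by (simp add: u_def)
  show ?thesis
  proof (cases "v < w")
    case True
    then show ?thesis using qv q12 qq w(2) unfolding W
      by (auto simp: pv_def Mtv omega_at evec_def pvec_def eps_def)
  next
    case False
    then have "w < v" using w(2) by simp
    then show ?thesis using qv q12 qq w(2) unfolding W
      by (auto simp: pv_def Mtv omega_at evec_def pvec_def eps_def)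
  qed
qed

end


context ctx
begin

lemma main: "infinite (twisted_classes (G_Gamma n E) \<phi>)"
proof (cases "\<exists>a. (\<forall>i. i \<notin> {1..n} \<longrightarrow> a i = 0) \<and> a \<noteq> 0 \<and> Mv n E \<phi> a = a")
  case True
  then obtain a where a: "\<And>i. i \<notin> {1..n} \<Longrightarrow> a i = 0" "a \<noteq> 0" "Mv n E \<phi> a = a" by blast
  obtain i0 where i0: "a i0 \<noteq> 0" using a(2) by (auto simp: fun_eq_iff)
  then have i0n: "i0 \<in> {1..n}" using a(1) by blast
  have hfix: "(\<Sum>j\<in>{1..n}. Mt n E \<phi> j i * a j) = a i" if "i \<in> {1..n}" for i
    using fun_cong[OF a(3), of i] by (simp add: Mv_def mult.commute)
  obtain u' where u': "\<exists>j\<in>{1..n}. u' j \<noteq> 0" "\<forall>j\<in>{1..n}. (\<Sum>i\<in>{1..n}. u' i * Mt n E \<phi> j i) = u' j"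
    using LA_transpose[of "{1..n}" i0 a "\<lambda>i j. Mt n E \<phi> j i"] i0 i0n hfix by auto
  obtain k0 where k0: "k0 \<in> {1..n}" "u' k0 \<noteq> 0" using u'(1) by blast
  show ?thesis
  proof (rule lemmaA[where u=u', OF hom k0])
    fix b :: "nat \<Rightarrow> int"
    have "(\<Sum>i\<in>{1..n}. u' i * Mv n E \<phi> b i) = (\<Sum>i\<in>{1..n}. \<Sum>k\<in>{1..n}. b k * (u' i * Mt n E \<phi> k i))"
      by (simp add: Mv_def sum_distrib_left mult.left_commute)
    also have "\<dots> = (\<Sum>k\<in>{1..n}. \<Sum>i\<in>{1..n}. b k * (u' i * Mt n E \<phi> k i))"
      by (rule sum.swap)
    also have "\<dots> = (\<Sum>k\<in>{1..n}. b k * u' k)"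
    proof (rule sum.cong[OF refl])
      fix k assume k: "k \<in> {1..n}"
      have "(\<Sum>i\<in>{1..n}. b k * (u' i * Mt n E \<phi> k i)) = b k * (\<Sum>i\<in>{1..n}. u' i * Mt n E \<phi> k i)"
        by (rule sum_distrib_left[symmetric])
      then show "(\<Sum>i\<in>{1..n}. b k * (u' i * Mt n E \<phi> k i)) = b k * u' k" using u'(2) k by simp
    qed
    finally show "(\<Sum>i\<in>{1..n}. u' i * Mv n E \<phi> b i) = (\<Sum>i\<in>{1..n}. u' i * b i)"
      by (simp add: mult.commute)
  qed
next
  case False
  then have nofix: "\<And>a. (\<And>i. i \<notin> {1..n} \<Longrightarrow> a i = 0) \<Longrightarrow> Mv n E \<phi> a = a \<Longrightarrow> a = 0" by blast
  have "u v \<noteq> 1"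
  proof
    assume "u v = 1"
    then have "Mv n E \<phi> (evec v) = evec v" using Mv_evec[OF v(1)] u_eq by (simp add: u_def)
    then have "evec v = 0" using nofix[of "evec v"] evec_supp[OF v(1)] by blast
    then show False by (metis evec_def zero_fun_def one_neq_zero)
  qed
  then have d: "u v = -1" using delta by simp
  show ?thesis
  proof (cases "eps = 1")
    case True
    show ?thesis
    proof (rule lemmaA[OF hom w(1), of "evec w"])
      show "evec w w \<noteq> 0" by (simp add: evec_def)
      fix b :: "nat \<Rightarrow> int"
      show "(\<Sum>i\<in>{1..n}. evec w i * Mv n E \<phi> b i) = (\<Sum>i\<in>{1..n}. evec w i * b i)"
        using w(1) True by (simp add: sum_evec Mv_w del: atLeastAtMost_iff)
    qed
  next
    case False
    then have e: "eps = -1" using eps by simp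
    have hfix: "(\<Sum>p\<in>PP n E. Wv n E \<phi> p q * pvec pv p) = pvec pv q" if "q \<in> PP n E" for q
    proof -
      have "(\<Sum>p\<in>PP n E. Wv n E \<phi> p q * pvec pv p) = (\<Sum>p\<in>PP n E. if p = pv then Wv n E \<phi> pv q else 0)"
        by (intro sum.cong refl) (auto simp: pvec_def)
      also have "\<dots> = Wv n E \<phi> pv q" using pv_PP by simp
      also have "\<dots> = pvec pv q" using Wv_pv[OF that] d e by simp
      finally show ?thesis .
    qed
    obtain f where f: "\<exists>j\<in>PP n E. f j \<noteq> 0" "\<forall>p\<in>PP n E. (\<Sum>q\<in>PP n E. f q * Wv n E \<phi> p q) = f p"
      using LA_transpose[of "PP n E" pv "pvec pv" "\<lambda>q p. Wv n E \<phi> p q"] pv_PP hfix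
      by (auto simp: pvec_def)
    obtain p1 where p1: "p1 \<in> PP n E" "f p1 \<noteq> 0" using f(1) by blast
    show ?thesis
    proof (rule lemmaB[where f=f, OF hom nofix p1])
      fix t :: "nat \<times> nat \<Rightarrow> int"
      have "(\<Sum>q\<in>PP n E. f q * Lam n E \<phi> t q) = (\<Sum>q\<in>PP n E. \<Sum>p\<in>PP n E. t p * (f q * Wv n E \<phi> p q))"
        by (simp add: Lam_def sum_distrib_left mult.left_commute)
      also have "\<dots> = (\<Sum>p\<in>PP n E. \<Sum>q\<in>PP n E. t p * (f q * Wv n E \<phi> p q))"
        by (rule sum.swap)
      also have "\<dots> = (\<Sum>p\<in>PP n E. t p * f p)"
        proof (rule sum.cong[OF refl])
        fix p assume p: "p \<in> PP n E"
        have "(\<Sum>q\<in>PP n E. t p * (f q * Wv n E \<phi> p q)) = t p * (\<Sum>q\<in>PP n E. f q * Wv n E \<phi> p q)"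
          by (rule sum_distrib_left[symmetric])
        then show "(\<Sum>q\<in>PP n E. t p * (f q * Wv n E \<phi> p q)) = t p * f p" using f(2) p by simp
      qed
      finally show "(\<Sum>q\<in>PP n E. f q * Lam n E \<phi> t q) = (\<Sum>q\<in>PP n E. f q * t q)"
        by (simp add: mult.commute)
    qed
  qed
qed

end

theorem theorem4p4:
  fixes n :: nat and E :: "nat set set"
  assumes "simple_graph n E"
    and "\<forall>i\<in>{1..n}. degree n E i + 2 \<le> n"
    and "\<exists>!i. i \<in> {1..n} \<and> degree n E i + 2 = n"
  shows "R_infty (G_Gamma n E)"
proof -
  obtain v where v: "v \<in> {1..n}" "degree n E v + 2 = n"
    and uniq: "\<And>i. i \<in> {1..n} \<Longrightarrow> degree n E i + 2 = n \<Longrightarrow> i = v"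
    using assms(3) by (metis (no_types, lifting))
  show ?thesis unfolding R_infty_def
  proof
    fix \<phi> assume "\<phi> \<in> iso (G_Gamma n E) (G_Gamma n E)"
    then interpret ctx n E \<phi> v by (intro ctx.intro assms(1) assms(2) v uniq)
    show "infinite (twisted_classes (G_Gamma n E) \<phi>)" by (rule main)
  qed
qed


end
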